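(* Let $n \equiv 3 \pmod 4$, $\ell = (n+1)/4$, $A = \{(a,b) \in 2^{[n]}\times 2^{[n]} \mid |a| = |b| = \ell,\ |a\cap b| = 0\}$ and $B = \{(a,b) \in 2^{[n]}\times 2^{[n]} \mid |a| = |b| = \ell,\ |a\cap b| = 1\}$. Let $\mu$ be any probability distribution on pairs $(a,b)$ of subsets of $[n]$ supported on $A\cup B$ and uniform when conditioned on $A$ and when conditioned on $B$. Let $f, g$ be nonnegative functions on $2^{[n]}$ and let $X = f(a)g(b)$ with $(a,b)\sim\mu$. Then for every $0 < \epsilon < 1$, \[ (1-\epsilon)\,\mathbb{E}[X \mid A] - \mathbb{E}[X \mid B] \leqslant \|X\restriction(A\cup B)\|_\infty \, 2^{-\frac{\epsilon^2}{16\ln 2}\ell + O(\log \ell)}, \] where the constant in $O(\log\ell)$ is absolute and $X \restriction (A\cup B)$ denotes the function $(a,b)\mapsto f(a)g(b)$ restricted to $A \cup B$. *)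

theory Defs
  imports "HOL-Probability.Probability"
begin

definition pairs_meet :: "nat \<Rightarrow> nat \<Rightarrow> nat \<Rightarrow> (nat set \<times> nat set) set" where
  "pairs_meet n l k = {(a, b). a \<subseteq> {1..n} \<and> b \<subseteq> {1..n} \<and> card a = l \<and> card b = l
                          \<and> card (a \<inter> b) = k}"

end

theory Submission
  imports Defs
begin


lemma artanh_ge:
  fixes y :: real assumes "0 \<le> y" "y < 1"
  shows "2*y \<le> ln (1+y) - ln (1-y)"
proof -
  have "(\<lambda>z. ln (1+z) - ln (1-z) - 2*z) 0 \<le> (\<lambda>z. ln (1+z) - ln (1-z) - 2*z) y"
  proof (rule deriv_nonneg_imp_mono[where g="\<lambda>z. ln (1+z) - ln (1-z) - 2*z" and g'="\<lambda>z. 1/(1+z) + 1/(1-z) - 2"])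
    fix x assume x: "x \<in> {0..y}"
    then have "0 < 1 + x" "0 < 1 - x" using assms by auto
    then have "1 + x \<noteq> 0" "1 - x \<noteq> 0" by auto
    then show "((\<lambda>z. ln (1+z) - ln (1-z) - 2*z) has_real_derivative 1/(1+x) + 1/(1-x) - 2) (at x)"
      using \<open>0 < 1 + x\<close> \<open>0 < 1 - x\<close>
      by (auto intro!: derivative_eq_intros)
  next
    fix x assume x: "x \<in> {0..y}"
    then have a: "0 < 1 + x" "0 < 1 - x" "0 \<le> x" using assms by auto
    have d: "(1+x)*(1-x) \<noteq> 0" using a by simp
    have "1/(1+x) + 1/(1-x) - 2 = (1/(1+x) + 1/(1-x) - 2) * ((1+x)*(1-x)) / ((1+x)*(1-x))"
      using d by simp
    also have "(1/(1+x) + 1/(1-x) - 2) * ((1+x)*(1-x)) = 2*x^2"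
    proof -
      have e1: "1/(1+x) * ((1+x)*(1-x)) = 1-x" using a by simp
      have e2: "1/(1-x) * ((1+x)*(1-x)) = 1+x" using a by simp
      have "(1/(1+x) + 1/(1-x) - 2) * ((1+x)*(1-x)) = 1/(1+x) * ((1+x)*(1-x)) + 1/(1-x) * ((1+x)*(1-x)) - 2*((1+x)*(1-x))"
        by (simp add: algebra_simps)
      also have "\<dots> = (1-x) + (1+x) - 2*((1+x)*(1-x))" by (simp only: e1 e2)
      finally have "(1/(1+x) + 1/(1-x) - 2) * ((1+x)*(1-x)) = (1-x) + (1+x) - 2*((1+x)*(1-x))" .
      then show ?thesis by (simp add: algebra_simps power2_eq_square)
    qed
    finally have "1/(1+x) + 1/(1-x) - 2 = 2*x^2/((1+x)*(1-x))" .
    also have "\<dots> \<ge> 0" using a by simp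
    finally show "0 \<le> 1/(1+x) + 1/(1-x) - 2" .
  qed (use assms in auto)
  then show ?thesis by simp
qed

lemma phi_ge:
  fixes x :: real assumes "0 \<le> x" "x < 1"
  shows "x^2 \<le> (1+x)*ln(1+x) + (1-x)*ln(1-x)"
proof -
  have "(\<lambda>z. (1+z)*ln(1+z) + (1-z)*ln(1-z) - z^2) 0 \<le> (\<lambda>z. (1+z)*ln(1+z) + (1-z)*ln(1-z) - z^2) x"
  proof (rule deriv_nonneg_imp_mono[where g="\<lambda>z. (1+z)*ln(1+z) + (1-z)*ln(1-z) - z^2" and g'="\<lambda>z. ln (1+z) - ln (1-z) - 2*z"])
    fix y assume y: "y \<in> {0..x}"
    then have "0 < 1 + y" "0 < 1 - y" using assms by auto
    then show "((\<lambda>z. (1+z)*ln(1+z) + (1-z)*ln(1-z) - z^2) has_real_derivative ln (1+y) - ln (1-y) - 2*y) (at y)"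
      by (auto intro!: derivative_eq_intros simp: power2_eq_square)
  next
    fix y assume y: "y \<in> {0..x}"
    then show "0 \<le> ln (1+y) - ln (1-y) - 2*y" using artanh_ge[of y] assms by auto
  qed (use assms in auto)
  then show ?thesis by simp
qed

lemma ln2_ge_half: "1/2 \<le> ln (2::real)"
proof -
  have "exp (1/2::real) ^ 2 = exp 1" by (simp add: exp_double[symmetric] power2_eq_square exp_add[symmetric])
  also have "\<dots> \<le> 3" by (rule exp_le)
  finally have "exp (1/2::real) ^ 2 \<le> 2^2" by simp
  then have "exp (1/2::real) \<le> 2" by (rule power2_le_imp_le) simp
  then show ?thesis by (subst ln_ge_iff) auto
qed

lemma pinsker_half:
  fixes x :: real assumes "0 \<le> x" "x \<le> 1"
  shows "x^2 \<le> (1+x)*ln(1+x) + (1-x)*ln(1-x)"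
proof (cases "x = 1")
  case True then show ?thesis using ln2_ge_half by simp
next
  case False then show ?thesis using phi_ge assms by auto
qed

lemma pinsker:
  fixes p :: real assumes "0 \<le> p" "p \<le> 1"
  shows "2*(p-1/2)^2 \<le> ln 2 + p * ln p + (1-p) * ln (1-p)"
proof -
  have key: "2*(p-1/2)^2 \<le> ln 2 + p * ln p + (1-p) * ln (1-p)" if h: "1/2 \<le> p" "p \<le> 1" for p :: real
  proof -
    define x where "x = 2*p - 1"
    have x: "0 \<le> x" "x \<le> 1" using h by (auto simp: x_def)
    have p: "p = (1+x)/2" "1 - p = (1-x)/2" by (auto simp: x_def)
    have e1: "p * ln p = (1+x)/2 * ln (1+x) - (1+x)/2 * ln 2"
    proof -
      have "1+x > 0" using x by auto
      then have "ln p = ln (1+x) - ln 2" unfolding p(1) by (simp add: ln_div)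
      then have "p * ln p = p * (ln (1+x) - ln 2)" by simp
      then show ?thesis by (simp add: p(1) algebra_simps)
    qed
    have e2: "(1-p) * ln (1-p) = (1-x)/2 * ln (1-x) - (1-x)/2 * ln 2"
    proof (cases "x = 1")
      case False then have "1-x > 0" using x by auto
      then have "ln (1-p) = ln (1-x) - ln 2" unfolding p(2) by (simp add: ln_div)
      then have "(1-p) * ln (1-p) = (1-p) * (ln (1-x) - ln 2)" by simp
      then show ?thesis by (simp add: p(2) algebra_simps)
    qed (simp add: p(2))
    have "2*(p-1/2)^2 = x^2/2" by (simp add: x_def power2_eq_square algebra_simps)
    also have "\<dots> \<le> ((1+x)*ln(1+x) + (1-x)*ln(1-x))/2" using pinsker_half[OF x] by simp
    also have "\<dots> = ln 2 + p * ln p + (1-p) * ln (1-p)" by (simp only: e1 e2) (simp add: field_simps)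
    finally show ?thesis .
  qed
  show ?thesis
  proof (cases "1/2 \<le> p")
    case True then show ?thesis using key assms by auto
  next
    case False
    have "2*((1-p)-1/2)^2 \<le> ln 2 + (1-p) * ln (1-p) + (1-(1-p)) * ln (1-(1-p))"
      using False assms by (intro key) auto
    then show ?thesis by (simp add: power2_eq_square algebra_simps)
  qed
qed




lemma sum_split_mem:
  assumes "finite K"
  shows "sum h {a\<in>K. P a} + sum h {a\<in>K. \<not> P a} = sum h K"
proof -
  have "sum h {a\<in>K. P a} + sum h {a\<in>K. \<not> P a} = (\<Sum>a\<in>K. (if P a then h a else 0) + (if \<not> P a then h a else 0))"
    using assms by (simp add: sum.inter_filter sum.distrib)
  also have "\<dots> = sum h K" by (rule sum.cong) auto
  finally show ?thesis .
qed

lemma sum_over_subset_if: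
  assumes "finite D" "a \<subseteq> D"
  shows "(\<Sum>i\<in>a. x i) = (\<Sum>i\<in>D. if i \<in> a then x i else 0)"
proof -
  have "{i\<in>D. i \<in> a} = a" using assms by auto
  then show ?thesis using sum.inter_filter[OF assms(1), of x "\<lambda>i. i \<in> a"] by simp
qed

lemma gibbs_entropy:
  fixes D :: "'a set" and K :: "'a set set" and h :: "'a set \<Rightarrow> real"
  assumes finD: "finite D" and KD: "K \<subseteq> Pow D"
    and hpos: "\<And>a. a \<in> K \<Longrightarrow> 0 \<le> h a"
    and hM: "\<And>a. a \<in> K \<Longrightarrow> h a \<le> Mh"
    and Fpos: "0 < sum h K"
  shows "(\<Sum>i\<in>D. (sum h {a\<in>K. i\<in>a} / sum h K) * ln (sum h {a\<in>K. i\<in>a} / sum h K)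
            + (1 - sum h {a\<in>K. i\<in>a} / sum h K) * ln (1 - sum h {a\<in>K. i\<in>a} / sum h K))
         \<le> ln (Mh / sum h K)"
proof -
  define F where "F = sum h K"
  define \<pi> where "\<pi> i = sum h {a\<in>K. i\<in>a} / F" for i
  define \<nu> where "\<nu> a = h a / F" for a
  define q where "q a = prod \<pi> a * prod (\<lambda>i. 1 - \<pi> i) (D - a)" for a
  have finK: "finite K" using KD finD by (meson finite_Pow_iff finite_subset)
  have Fp: "0 < F" using Fpos by (simp add: F_def)
  have split: "sum h {a\<in>K. i\<in>a} + sum h {a\<in>K. i\<notin>a} = F" for i
    using sum_split_mem[OF finK] by (simp add: F_def)
  have nn1: "0 \<le> sum h {a\<in>K. i\<in>a}" for i by (rule sum_nonneg) (use hpos in auto)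
  have nn0: "0 \<le> sum h {a\<in>K. i\<notin>a}" for i by (rule sum_nonneg) (use hpos in auto)
  have pi01: "0 \<le> \<pi> i" "\<pi> i \<le> 1" for i
    using nn1[of i] nn0[of i] split[of i] Fp by (auto simp: \<pi>_def field_simps)
  have omp: "1 - \<pi> i = sum h {a\<in>K. i\<notin>a} / F" for i
    using split[of i] Fp by (auto simp: \<pi>_def field_simps)
  have nu_sum: "sum \<nu> K = 1" using Fp by (simp add: \<nu>_def F_def sum_divide_distrib[symmetric])
  have nu_nn: "a \<in> K \<Longrightarrow> 0 \<le> \<nu> a" for a using hpos Fp by (simp add: \<nu>_def)
  have q_nn: "0 \<le> q a" for a
    unfolding q_def using pi01 by (intro mult_nonneg_nonneg prod_nonneg) auto
  have "sum q K \<le> sum q (Pow D)"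
    using KD q_nn finD by (intro sum_mono2) auto
  also have "sum q (Pow D) = (\<Prod>i\<in>D. \<pi> i + (1 - \<pi> i))"
    using prod_add[OF finD, of \<pi> "\<lambda>i. 1 - \<pi> i"] by (simp add: q_def)
  also have "\<dots> = 1" by simp
  finally have qsum: "sum q K \<le> 1" .
  have termwise: "\<nu> a * ln (q a) - \<nu> a * ln (\<nu> a) \<le> q a - \<nu> a" if a: "a \<in> K" for a
  proof (cases "\<nu> a = 0")
    case True then show ?thesis using q_nn[of a] by simp
  next
    case False
    then have np: "0 < \<nu> a" using nu_nn[OF a] by simp
    have ha: "0 < h a" using np Fp by (simp add: \<nu>_def field_simps)
    have aD: "a \<subseteq> D" using a KD by auto
    have "0 < \<pi> i" if "i \<in> a" for i
    proof -
      have "h a \<le> sum h {a\<in>K. i\<in>a}"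
        using that a finK hpos by (intro member_le_sum) auto
      then show ?thesis using ha Fp by (simp add: \<pi>_def)
    qed
    moreover have "0 < 1 - \<pi> i" if "i \<in> D - a" for i
    proof -
      have "h a \<le> sum h {a\<in>K. i\<notin>a}"
        using that a finK hpos by (intro member_le_sum) auto
      then show ?thesis using ha Fp by (simp add: omp)
    qed
    ultimately have qp: "0 < q a" unfolding q_def
      by (intro mult_pos_pos prod_pos) auto
    have "ln (q a) - ln (\<nu> a) = ln (q a / \<nu> a)" using qp np by (simp add: ln_div)
    also have "\<dots> \<le> q a / \<nu> a - 1" using qp np by (intro ln_le_minus_one) simp
    finally have "\<nu> a * (ln (q a) - ln (\<nu> a)) \<le> \<nu> a * (q a / \<nu> a - 1)"
      using np by (simp add: mult_left_mono)
    then show ?thesis using np by (simp add: algebra_simps)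
  qed
  have "(\<Sum>a\<in>K. \<nu> a * ln (q a)) - (\<Sum>a\<in>K. \<nu> a * ln (\<nu> a)) \<le> sum q K - sum \<nu> K"
    using termwise by (simp add: sum_subtractf[symmetric] sum_mono)
  then have G: "(\<Sum>a\<in>K. \<nu> a * ln (q a)) \<le> (\<Sum>a\<in>K. \<nu> a * ln (\<nu> a))"
    using qsum nu_sum by simp
  have "(\<Sum>a\<in>K. \<nu> a * ln (\<nu> a)) \<le> (\<Sum>a\<in>K. \<nu> a * ln (Mh / F))"
  proof (rule sum_mono)
    fix a assume a: "a \<in> K"
    show "\<nu> a * ln (\<nu> a) \<le> \<nu> a * ln (Mh / F)"
    proof (cases "\<nu> a = 0")
      case False
      then have np: "0 < \<nu> a" using nu_nn[OF a] by simp
      have "\<nu> a \<le> Mh / F" using hM[OF a] Fp by (simp add: \<nu>_def divide_right_mono)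
      then have "ln (\<nu> a) \<le> ln (Mh / F)" using np by simp
      then show ?thesis using np by (simp add: mult_left_mono)
    qed simp
  qed
  also have "\<dots> = ln (Mh / F)" using nu_sum by (simp add: sum_distrib_right[symmetric])
  finally have E: "(\<Sum>a\<in>K. \<nu> a * ln (q a)) \<le> ln (Mh / F)" using G by linarith
  have expand: "\<nu> a * ln (q a) = (\<Sum>i\<in>D. \<nu> a * (if i \<in> a then ln (\<pi> i) else ln (1 - \<pi> i)))"
    if a: "a \<in> K" for a
  proof (cases "\<nu> a = 0")
    case True then show ?thesis by simp
  next
    case False
    then have np: "0 < \<nu> a" using nu_nn[OF a] by simp
    have ha: "0 < h a" using np Fp by (simp add: \<nu>_def field_simps)
    have aD: "a \<subseteq> D" using a KD by auto
    have p1: "0 < \<pi> i" if "i \<in> a" for i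
    proof -
      have "h a \<le> sum h {a\<in>K. i\<in>a}"
        using that a finK hpos by (intro member_le_sum) auto
      then show ?thesis using ha Fp by (simp add: \<pi>_def)
    qed
    have p0: "0 < 1 - \<pi> i" if "i \<in> D - a" for i
    proof -
      have "h a \<le> sum h {a\<in>K. i\<notin>a}"
        using that a finK hpos by (intro member_le_sum) auto
      then show ?thesis using ha Fp by (simp add: omp)
    qed
    have finA: "finite a" using aD finD finite_subset by blast
    have "ln (q a) = ln (prod \<pi> a) + ln (prod (\<lambda>i. 1 - \<pi> i) (D - a))"
    proof -
      have "0 < prod \<pi> a" by (rule prod_pos) (use p1 in auto)
      moreover have "0 < prod (\<lambda>i. 1 - \<pi> i) (D - a)" by (rule prod_pos) (use p0 in auto)
      ultimately show ?thesis unfolding q_def by (simp add: ln_mult)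
    qed
    also have "\<dots> = (\<Sum>i\<in>a. ln (\<pi> i)) + (\<Sum>i\<in>D - a. ln (1 - \<pi> i))"
    proof -
      have "ln (prod \<pi> a) = (\<Sum>i\<in>a. ln (\<pi> i))"
        using finA p1 by (intro ln_prod) (auto dest: less_imp_neq[THEN not_sym])
      moreover have "ln (prod (\<lambda>i. 1 - \<pi> i) (D - a)) = (\<Sum>i\<in>D - a. ln (1 - \<pi> i))"
        using finD p0 by (intro ln_prod) force+
      ultimately show ?thesis by simp
    qed
    also have "\<dots> = (\<Sum>i\<in>D. if i \<in> a then ln (\<pi> i) else ln (1 - \<pi> i))"
    proof -
      have "(\<Sum>i\<in>D. if i \<in> a then ln (\<pi> i) else ln (1 - \<pi> i))
          = (\<Sum>i\<in>D \<inter> {i. i\<in>a}. ln (\<pi> i)) + (\<Sum>i\<in>D \<inter> - {i. i\<in>a}. ln (1 - \<pi> i))"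
        using finD by (rule sum.If_cases)
      moreover have "D \<inter> {i. i\<in>a} = a" "D \<inter> - {i. i\<in>a} = D - a" using aD by auto
      ultimately show ?thesis by simp
    qed
    finally show ?thesis by (simp add: sum_distrib_left)
  qed
  have "(\<Sum>a\<in>K. \<nu> a * ln (q a)) = (\<Sum>a\<in>K. \<Sum>i\<in>D. \<nu> a * (if i \<in> a then ln (\<pi> i) else ln (1 - \<pi> i)))"
    using expand by (rule sum.cong[OF refl])
  also have "\<dots> = (\<Sum>i\<in>D. \<Sum>a\<in>K. \<nu> a * (if i \<in> a then ln (\<pi> i) else ln (1 - \<pi> i)))"
    by (rule sum.swap)
  also have "\<dots> = (\<Sum>i\<in>D. \<pi> i * ln (\<pi> i) + (1 - \<pi> i) * ln (1 - \<pi> i))"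
  proof (rule sum.cong[OF refl])
    fix i assume "i \<in> D"
    have "(\<Sum>a\<in>K. \<nu> a * (if i \<in> a then ln (\<pi> i) else ln (1 - \<pi> i)))
       = (\<Sum>a\<in>K. (if i \<in> a then \<nu> a else 0)) * ln (\<pi> i) + (\<Sum>a\<in>K. (if i \<notin> a then \<nu> a else 0)) * ln (1 - \<pi> i)"
      by (auto simp add: sum_distrib_right sum.distrib[symmetric] intro!: sum.cong)
    also have "(\<Sum>a\<in>K. (if i \<in> a then \<nu> a else 0)) = \<pi> i"
      using finK by (simp add: sum.inter_filter[symmetric] \<nu>_def \<pi>_def sum_divide_distrib)
    also have "(\<Sum>a\<in>K. (if i \<notin> a then \<nu> a else 0)) = 1 - \<pi> i"
      using finK by (simp add: sum.inter_filter[symmetric] \<nu>_def omp sum_divide_distrib)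
    finally show "(\<Sum>a\<in>K. \<nu> a * (if i \<in> a then ln (\<pi> i) else ln (1 - \<pi> i)))
        = \<pi> i * ln (\<pi> i) + (1 - \<pi> i) * ln (1 - \<pi> i)" by simp
  qed
  finally have "(\<Sum>i\<in>D. \<pi> i * ln (\<pi> i) + (1 - \<pi> i) * ln (1 - \<pi> i)) \<le> ln (Mh / F)"
    using E by simp
  then show ?thesis by (simp add: \<pi>_def F_def)
qed

lemma quad_bound:
  fixes \<epsilon> F u :: real
  assumes "0 < \<epsilon>" "\<epsilon> < 1" "0 \<le> u" "u \<le> F" "0 < F"
  shows "max 0 ((1-\<epsilon>/4)*(F - u) - u) \<le> 8*F/\<epsilon> * (u/F - 1/2)^2"
proof -
  have rhs: "8*F/\<epsilon> * (u/F - 1/2)^2 = 2*(2*u - F)^2 / (\<epsilon>*F)"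
    using assms by (simp add: field_simps power2_eq_square)
  have "\<epsilon>*F*((1-\<epsilon>/4)*(F - u) - u) \<le> 2*(2*u - F)^2"
  proof -
    define d where "d = F - 2*u"
    have e: "2*(2*u - F)^2 - \<epsilon>*F*((1-\<epsilon>/4)*(F - u) - u)
        = 2*(d - \<epsilon>*(2-\<epsilon>/4)*F/8)^2 + F^2*(\<epsilon>^2/32)*(4 - (2-\<epsilon>/4)^2)"
      by (simp add: d_def power2_eq_square field_simps)
    have "0 \<le> 4 - (2-\<epsilon>/4)^2" using assms by (simp add: power2_eq_square algebra_simps)
    then have "0 \<le> F^2*(\<epsilon>^2/32)*(4 - (2-\<epsilon>/4)^2)" by simp
    then show ?thesis using e by (smt (verit) zero_le_power2)
  qed
  then have "(1-\<epsilon>/4)*(F - u) - u \<le> 2*(2*u - F)^2 / (\<epsilon>*F)"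
    using assms by (simp add: field_simps)
  moreover have "0 \<le> 2*(2*u - F)^2 / (\<epsilon>*F)" using assms by simp
  ultimately show ?thesis using rhs by simp
qed

lemma local_bound:
  fixes D :: "'a set" and K :: "'a set set" and h :: "'a set \<Rightarrow> real"
  assumes finD: "finite D" and KD: "K \<subseteq> Pow D"
    and hpos: "\<And>a. a \<in> K \<Longrightarrow> 0 \<le> h a"
    and hM: "\<And>a. a \<in> K \<Longrightarrow> h a \<le> Mh"
    and Fpos: "0 < sum h K" and eps: "0 < \<epsilon>" "\<epsilon> < 1"
  shows "(\<Sum>i\<in>D. max 0 ((1-\<epsilon>/4)*(sum h K - sum h {a\<in>K. i\<in>a}) - sum h {a\<in>K. i\<in>a}))
     \<le> 4 * sum h K / \<epsilon> * (real (card D) * ln 2 + ln (Mh / sum h K))"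
proof -
  define F where "F = sum h K"
  define \<pi> where "\<pi> i = sum h {a\<in>K. i\<in>a} / F" for i
  have finK: "finite K" using KD finD by (meson finite_Pow_iff finite_subset)
  have Fp: "0 < F" using Fpos by (simp add: F_def)
  have unn: "0 \<le> sum h {a\<in>K. i\<in>a}" for i by (rule sum_nonneg) (use hpos in auto)
  have ule: "sum h {a\<in>K. i\<in>a} \<le> F" for i
    unfolding F_def using finK hpos by (intro sum_mono2) auto
  have pi01: "0 \<le> \<pi> i" "\<pi> i \<le> 1" for i
    using unn[of i] ule[of i] Fp by (auto simp: \<pi>_def field_simps)
  have "(\<Sum>i\<in>D. max 0 ((1-\<epsilon>/4)*(F - sum h {a\<in>K. i\<in>a}) - sum h {a\<in>K. i\<in>a}))
      \<le> (\<Sum>i\<in>D. 8*F/\<epsilon> * (\<pi> i - 1/2)^2)"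
    unfolding \<pi>_def by (intro sum_mono quad_bound) (use eps unn ule Fp in auto)
  also have "\<dots> = 4*F/\<epsilon> * (\<Sum>i\<in>D. 2*(\<pi> i - 1/2)^2)"
    by (simp add: sum_distrib_left algebra_simps)
  also have "\<dots> \<le> 4*F/\<epsilon> * (\<Sum>i\<in>D. ln 2 + (\<pi> i * ln (\<pi> i) + (1 - \<pi> i) * ln (1 - \<pi> i)))"
    using Fp eps pinsker pi01 by (intro mult_left_mono sum_mono) (auto simp: add.assoc)
  also have "\<dots> = 4*F/\<epsilon> * (real (card D) * ln 2 + (\<Sum>i\<in>D. \<pi> i * ln (\<pi> i) + (1 - \<pi> i) * ln (1 - \<pi> i)))"
    by (simp add: sum.distrib)
  also have "\<dots> \<le> 4*F/\<epsilon> * (real (card D) * ln 2 + ln (Mh / F))"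
    using gibbs_entropy[OF finD KD hpos hM Fpos] Fp eps
    by (intro mult_left_mono add_left_mono) (auto simp: \<pi>_def F_def)
  finally show ?thesis by (simp add: F_def)
qed



definition lay :: "nat \<Rightarrow> 'a set \<Rightarrow> 'a set set" where
  "lay k S = {a. a \<subseteq> S \<and> card a = k}"

definition Z0 :: "nat \<Rightarrow> ('a set \<Rightarrow> real) \<Rightarrow> 'a set \<Rightarrow> real" where
  "Z0 l h T = sum h (lay l T)"

definition Z1 :: "nat \<Rightarrow> ('a set \<Rightarrow> real) \<Rightarrow> 'a \<Rightarrow> 'a set \<Rightarrow> real" where
  "Z1 l h i T = sum h {a \<in> lay l (insert i T). i \<in> a}"

lemma finite_lay: "finite S \<Longrightarrow> finite (lay k S)"
  unfolding lay_def by (rule finite_subset[of _ "Pow S"]) auto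

lemma card_lay: "finite S \<Longrightarrow> card (lay k S) = card S choose k"
  unfolding lay_def by (rule n_subsets)

lemma card_supsets:
  assumes "finite X" "a \<subseteq> X"
  shows "card {T. a \<subseteq> T \<and> T \<subseteq> X \<and> card T = card a + k} = card (X - a) choose k"
proof -
  have fa: "finite a" using assms finite_subset by blast
  have eq: "{T. a \<subseteq> T \<and> T \<subseteq> X \<and> card T = card a + k} = (\<lambda>S. a \<union> S) ` {S. S \<subseteq> X - a \<and> card S = k}"
  proof (rule set_eqI, rule iffI)
    fix T assume "T \<in> {T. a \<subseteq> T \<and> T \<subseteq> X \<and> card T = card a + k}"
    then have T: "a \<subseteq> T" "T \<subseteq> X" "card T = card a + k" by auto
    have fT: "finite T" using T assms finite_subset by blast
    have "card (T - a) = k" using T fT by (simp add: card_Diff_subset fa)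
    moreover have "T = a \<union> (T - a)" using T by auto
    ultimately show "T \<in> (\<lambda>S. a \<union> S) ` {S. S \<subseteq> X - a \<and> card S = k}" using T by blast
  next
    fix T assume "T \<in> (\<lambda>S. a \<union> S) ` {S. S \<subseteq> X - a \<and> card S = k}"
    then obtain S where S: "S \<subseteq> X - a" "card S = k" "T = a \<union> S" by auto
    have fS: "finite S" using S assms finite_subset by (metis finite_Diff)
    have "a \<inter> S = {}" using S by auto
    then have "card T = card a + k" using S fa fS by (simp add: card_Un_disjoint)
    then show "T \<in> {T. a \<subseteq> T \<and> T \<subseteq> X \<and> card T = card a + k}" using S assms by auto
  qed
  have inj: "inj_on (\<lambda>S. a \<union> S) {S. S \<subseteq> X - a \<and> card S = k}"
    by (rule inj_onI) blast
  show ?thesis unfolding eq using inj assms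
    by (simp add: card_image n_subsets)
qed

lemma double_count:
  assumes "finite P" "finite Q"
    and G: "\<And>p. p \<in> P \<Longrightarrow> G p = (\<Sum>q\<in>Q. if R p q then w q else 0)"
    and K: "\<And>q. q \<in> Q \<Longrightarrow> card {p\<in>P. R p q} = K"
  shows "(\<Sum>p\<in>P. G p) = real K * (\<Sum>q\<in>Q. w q)"
proof -
  have "(\<Sum>p\<in>P. G p) = (\<Sum>p\<in>P. \<Sum>q\<in>Q. if R p q then w q else 0)" using G by simp
  also have "\<dots> = (\<Sum>q\<in>Q. \<Sum>p\<in>P. if R p q then w q else 0)" by (rule sum.swap)
  also have "\<dots> = (\<Sum>q\<in>Q. w q * real (card {p\<in>P. R p q}))"
  proof (rule sum.cong[OF refl])
    fix q assume "q \<in> Q"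
    have "(\<Sum>p\<in>P. if R p q then w q else 0) = (\<Sum>p\<in>{p\<in>P. R p q}. w q)"
      using assms(1) by (rule sum.inter_filter[symmetric])
    also have "\<dots> = w q * real (card {p\<in>P. R p q})" by simp
    finally show "(\<Sum>p\<in>P. if R p q then w q else 0) = w q * real (card {p\<in>P. R p q})" .
  qed
  also have "\<dots> = real K * (\<Sum>q\<in>Q. w q)" using K by (simp add: sum_distrib_left mult.commute)
  finally show ?thesis .
qed

locale DS =
  fixes N :: "'a set" and l :: nat
  assumes finN: "finite N" and cardN: "card N = 4*l - 1" and l1: "1 \<le> l"
begin

definition TT :: "('a \<times> 'a set) set" where
  "TT = {(i,T). i \<in> N \<and> T \<subseteq> N - {i} \<and> card T = 2*l - 1}"

definition Tb :: "'a \<Rightarrow> 'a set \<Rightarrow> 'a set" where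
  "Tb i T = N - {i} - T"

definition PM :: "nat \<Rightarrow> ('a set \<times> 'a set) set" where
  "PM k = {(a,b). a \<subseteq> N \<and> b \<subseteq> N \<and> card a = l \<and> card b = l \<and> card (a \<inter> b) = k}"

lemma finite_TT: "finite TT"
proof -
  have "TT \<subseteq> N \<times> Pow N" unfolding TT_def by auto
  then show ?thesis using finN finite_subset by blast
qed

lemma finite_PM: "finite (PM k)"
proof -
  have "PM k \<subseteq> Pow N \<times> Pow N" unfolding PM_def by auto
  then show ?thesis using finN finite_subset by blast
qed

lemma PM_sym: "(a,b) \<in> PM k \<longleftrightarrow> (b,a) \<in> PM k"
  unfolding PM_def by (auto simp: Int_commute)

lemma count_A:
  assumes ab: "(a,b) \<in> PM 0"
  shows "card {p\<in>TT. a \<subseteq> snd p \<and> b \<subseteq> Tb (fst p) (snd p)} = (2*l-1) * ((2*l-2) choose (l-1))"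
proof -
  have a: "a \<subseteq> N" "b \<subseteq> N" "card a = l" "card b = l" "card (a \<inter> b) = 0" using ab by (auto simp: PM_def)
  have fa: "finite a" "finite b" using a finN finite_subset by blast+
  have dis: "a \<inter> b = {}" using a fa by simp
  have cab: "card (a \<union> b) = 2*l" using fa dis a by (simp add: card_Un_disjoint)
  have eq: "{p\<in>TT. a \<subseteq> snd p \<and> b \<subseteq> Tb (fst p) (snd p)}
      = Sigma (N - (a \<union> b)) (\<lambda>i. {T. a \<subseteq> T \<and> T \<subseteq> N - {i} - b \<and> card T = card a + (l-1)})"
  proof (rule set_eqI)
    fix p :: "'a \<times> 'a set"
    obtain i T where p: "p = (i,T)" by (cases p)
    have c: "card a + (l-1) = 2*l - 1" using a l1 by simp
    show "p \<in> {p\<in>TT. a \<subseteq> snd p \<and> b \<subseteq> Tb (fst p) (snd p)} \<longleftrightarrow>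
          p \<in> Sigma (N - (a \<union> b)) (\<lambda>i. {T. a \<subseteq> T \<and> T \<subseteq> N - {i} - b \<and> card T = card a + (l-1)})"
    proof
      assume "p \<in> {p\<in>TT. a \<subseteq> snd p \<and> b \<subseteq> Tb (fst p) (snd p)}"
      then have h: "i \<in> N" "T \<subseteq> N - {i}" "card T = 2*l-1" "a \<subseteq> T" "b \<subseteq> N - {i} - T"
        unfolding p TT_def Tb_def by auto
      then have "i \<notin> a" "i \<notin> b" "T \<inter> b = {}" by auto
      then show "p \<in> Sigma (N - (a \<union> b)) (\<lambda>i. {T. a \<subseteq> T \<and> T \<subseteq> N - {i} - b \<and> card T = card a + (l-1)})"
        unfolding p c using h by auto
    next
      assume "p \<in> Sigma (N - (a \<union> b)) (\<lambda>i. {T. a \<subseteq> T \<and> T \<subseteq> N - {i} - b \<and> card T = card a + (l-1)})"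
      then have h: "i \<in> N" "i \<notin> a" "i \<notin> b" "a \<subseteq> T" "T \<subseteq> N - {i} - b" "card T = 2*l-1"
        unfolding p c by auto
      then have "b \<subseteq> N - {i} - T" using a by auto
      then show "p \<in> {p\<in>TT. a \<subseteq> snd p \<and> b \<subseteq> Tb (fst p) (snd p)}"
        unfolding p TT_def Tb_def using h by auto
    qed
  qed
  have "card (N - {i} - b - a) = 2*l - 2" if i: "i \<in> N - (a \<union> b)" for i
  proof -
    have "N - {i} - b - a = N - insert i (a \<union> b)" by auto
    moreover have "card (insert i (a \<union> b)) = 2*l + 1" using i cab fa by simp
    moreover have "card (N - insert i (a \<union> b)) = card N - card (insert i (a \<union> b))"
      using finN a i by (intro card_Diff_subset) (auto intro: finite_subset)
    ultimately show ?thesis using cardN by simp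
  qed
  then have inner: "card {T. a \<subseteq> T \<and> T \<subseteq> N - {i} - b \<and> card T = card a + (l-1)} = (2*l-2) choose (l-1)"
    if i: "i \<in> N - (a \<union> b)" for i
    using card_supsets[of "N - {i} - b" a "l-1"] finN a i dis by auto
  have "card (N - (a \<union> b)) = 2*l - 1" using cardN cab finN a by (simp add: card_Diff_subset fa)
  moreover have fin_in: "finite {T. a \<subseteq> T \<and> T \<subseteq> N - {i} - b \<and> card T = card a + (l-1)}" for i
    by (rule finite_subset[of _ "Pow N"]) (use finN in auto)
  moreover have "finite (N - (a \<union> b))" using finN by simp
  ultimately have "card (Sigma (N - (a \<union> b)) (\<lambda>i. {T. a \<subseteq> T \<and> T \<subseteq> N - {i} - b \<and> card T = card a + (l-1)}))
      = (\<Sum>i\<in>N - (a \<union> b). card {T. a \<subseteq> T \<and> T \<subseteq> N - {i} - b \<and> card T = card a + (l-1)})"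
    by (intro card_SigmaI) auto
  also have "\<dots> = (\<Sum>i\<in>N - (a \<union> b). (2*l-2) choose (l-1))"
    by (rule sum.cong[OF refl]) (rule inner)
  also have "\<dots> = (2*l-1) * ((2*l-2) choose (l-1))" using \<open>card (N - (a \<union> b)) = 2*l - 1\<close> by simp
  finally show ?thesis unfolding eq .
qed

lemma count_B:
  assumes ab: "(a,b) \<in> PM 1"
  shows "card {p\<in>TT. fst p \<in> a \<and> fst p \<in> b \<and> a \<subseteq> insert (fst p) (snd p) \<and> b \<subseteq> insert (fst p) (Tb (fst p) (snd p))}
         = (2*l) choose l"
proof -
  have a: "a \<subseteq> N" "b \<subseteq> N" "card a = l" "card b = l" "card (a \<inter> b) = 1" using ab by (auto simp: PM_def)
  have fa: "finite a" "finite b" using a finN finite_subset by blast+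
  obtain j where j: "a \<inter> b = {j}" using a(5) card_1_singletonE by blast
  have cab: "card (a \<union> b) = 2*l - 1" using card_Un_Int[OF fa] a by simp
  have "j \<in> a" "j \<in> b" using j by auto
  have jj: "\<And>x. x \<in> a \<Longrightarrow> x \<in> b \<Longrightarrow> x = j" using j by auto
  have caj: "card (a - {j}) = l - 1" using a fa \<open>j \<in> a\<close> by (simp add: card_Diff_singleton)
  have eq: "{p\<in>TT. fst p \<in> a \<and> fst p \<in> b \<and> a \<subseteq> insert (fst p) (snd p) \<and> b \<subseteq> insert (fst p) (Tb (fst p) (snd p))}
      = {j} \<times> {T. a - {j} \<subseteq> T \<and> T \<subseteq> N - b \<and> card T = card (a - {j}) + l}"
  proof (rule set_eqI)
    fix p :: "'a \<times> 'a set"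
    obtain i T where p: "p = (i,T)" by (cases p)
    show "p \<in> {p\<in>TT. fst p \<in> a \<and> fst p \<in> b \<and> a \<subseteq> insert (fst p) (snd p) \<and> b \<subseteq> insert (fst p) (Tb (fst p) (snd p))}
        \<longleftrightarrow> p \<in> {j} \<times> {T. a - {j} \<subseteq> T \<and> T \<subseteq> N - b \<and> card T = card (a - {j}) + l}"
    proof
      assume "p \<in> {p\<in>TT. fst p \<in> a \<and> fst p \<in> b \<and> a \<subseteq> insert (fst p) (snd p) \<and> b \<subseteq> insert (fst p) (Tb (fst p) (snd p))}"
      then have h: "i \<in> N" "T \<subseteq> N - {i}" "card T = 2*l-1" "i \<in> a" "i \<in> b" "a \<subseteq> insert i T"
          "b \<subseteq> insert i (N - {i} - T)"
        unfolding p TT_def Tb_def by auto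
      then have ij: "i = j" using jj by blast
      have "a - {j} \<subseteq> T" using h ij by blast
      moreover have "T \<subseteq> N - b" using h by blast
      moreover have "card T = card (a - {j}) + l" using h(3) caj l1 by simp
      ultimately show "p \<in> {j} \<times> {T. a - {j} \<subseteq> T \<and> T \<subseteq> N - b \<and> card T = card (a - {j}) + l}"
        unfolding p using ij by simp
    next
      assume "p \<in> {j} \<times> {T. a - {j} \<subseteq> T \<and> T \<subseteq> N - b \<and> card T = card (a - {j}) + l}"
      then have h: "i = j" "a - {j} \<subseteq> T" "T \<subseteq> N - b" "card T = card (a - {j}) + l"
        unfolding p by auto
      have "j \<in> N" using \<open>j \<in> a\<close> a by blast
      moreover have "T \<subseteq> N - {j}" using h \<open>j \<in> b\<close> by blast
      moreover have "card T = 2*l - 1" using h(4) caj l1 by simp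
      moreover have "a \<subseteq> insert j T" using h by blast
      moreover have "b \<subseteq> insert j (N - {j} - T)" using h a by blast
      ultimately show "p \<in> {p\<in>TT. fst p \<in> a \<and> fst p \<in> b \<and> a \<subseteq> insert (fst p) (snd p) \<and> b \<subseteq> insert (fst p) (Tb (fst p) (snd p))}"
        unfolding p TT_def Tb_def using h(1) \<open>j \<in> a\<close> \<open>j \<in> b\<close> by simp
    qed
  qed
  have "N - b - (a - {j}) = N - (a \<union> b)" using \<open>j \<in> b\<close> by auto
  moreover have "card (N - (a \<union> b)) = card N - card (a \<union> b)"
    using finN a by (intro card_Diff_subset) (auto intro: finite_subset)
  ultimately have "card (N - b - (a - {j})) = 2*l" using cardN cab l1 by simp
  then show ?thesis unfolding eq using card_supsets[of "N - b" "a - {j}" l] finN a j by auto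
qed

end


context DS begin

lemma sum_A:
  "(\<Sum>p\<in>TT. Z0 l h1 (snd p) * Z0 l h2 (Tb (fst p) (snd p)))
     = real ((2*l-1) * ((2*l-2) choose (l-1))) * (\<Sum>q\<in>PM 0. h1 (fst q) * h2 (snd q))"
proof (rule double_count[OF finite_TT finite_PM])
  fix p assume p: "p \<in> TT"
  obtain i T where pe: "p = (i,T)" by (cases p)
  have T: "i \<in> N" "T \<subseteq> N - {i}" using p pe by (auto simp: TT_def)
  have fT: "finite T" "finite (Tb i T)" using T finN finite_subset unfolding Tb_def by auto
  have seq: "lay l T \<times> lay l (Tb i T) = {q\<in>PM 0. fst q \<subseteq> T \<and> snd q \<subseteq> Tb i T}"
  proof (rule set_eqI)
    fix q :: "'a set \<times> 'a set"
    obtain a b where q: "q = (a,b)" by (cases q)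
    have fab: "a \<subseteq> T \<Longrightarrow> finite a" "b \<subseteq> Tb i T \<Longrightarrow> finite b" using fT finite_subset by auto
    show "q \<in> lay l T \<times> lay l (Tb i T) \<longleftrightarrow> q \<in> {q\<in>PM 0. fst q \<subseteq> T \<and> snd q \<subseteq> Tb i T}"
    proof
      assume h: "q \<in> lay l T \<times> lay l (Tb i T)"
      then have "a \<inter> b = {}" unfolding q lay_def Tb_def by auto
      then show "q \<in> {q\<in>PM 0. fst q \<subseteq> T \<and> snd q \<subseteq> Tb i T}"
        using h T unfolding q lay_def PM_def Tb_def by auto
    qed (auto simp: q lay_def PM_def)
  qed
  have "Z0 l h1 (snd p) * Z0 l h2 (Tb (fst p) (snd p)) = (\<Sum>a\<in>lay l T. \<Sum>b\<in>lay l (Tb i T). h1 a * h2 b)"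
    unfolding pe Z0_def by (simp add: sum_product)
  also have "\<dots> = (\<Sum>q\<in>lay l T \<times> lay l (Tb i T). h1 (fst q) * h2 (snd q))"
    by (simp add: sum.cartesian_product case_prod_beta)
  also have "\<dots> = (\<Sum>q\<in>{q\<in>PM 0. fst q \<subseteq> T \<and> snd q \<subseteq> Tb i T}. h1 (fst q) * h2 (snd q))"
    by (simp only: seq)
  also have "\<dots> = (\<Sum>q\<in>PM 0. if fst q \<subseteq> snd p \<and> snd q \<subseteq> Tb (fst p) (snd p) then h1 (fst q) * h2 (snd q) else 0)"
    unfolding pe using finite_PM by (simp add: sum.inter_filter)
  finally show "Z0 l h1 (snd p) * Z0 l h2 (Tb (fst p) (snd p)) =
      (\<Sum>q\<in>PM 0. if fst q \<subseteq> snd p \<and> snd q \<subseteq> Tb (fst p) (snd p) then h1 (fst q) * h2 (snd q) else 0)" .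
next
  fix q assume "q \<in> PM 0"
  then show "card {p\<in>TT. fst q \<subseteq> snd p \<and> snd q \<subseteq> Tb (fst p) (snd p)} = (2*l-1) * ((2*l-2) choose (l-1))"
    using count_A[of "fst q" "snd q"] by simp
qed

lemma sum_B:
  "(\<Sum>p\<in>TT. Z1 l h1 (fst p) (snd p) * Z1 l h2 (fst p) (Tb (fst p) (snd p)))
     = real ((2*l) choose l) * (\<Sum>q\<in>PM 1. h1 (fst q) * h2 (snd q))"
proof (rule double_count[OF finite_TT finite_PM])
  fix p assume p: "p \<in> TT"
  obtain i T where pe: "p = (i,T)" by (cases p)
  have T: "i \<in> N" "T \<subseteq> N - {i}" using p pe by (auto simp: TT_def)
  have fT: "finite T" "finite (Tb i T)" using T finN finite_subset unfolding Tb_def by auto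
  let ?R = "\<lambda>q. i \<in> fst q \<and> i \<in> snd q \<and> fst q \<subseteq> insert i T \<and> snd q \<subseteq> insert i (Tb i T)"
  have seq: "{a\<in>lay l (insert i T). i \<in> a} \<times> {b\<in>lay l (insert i (Tb i T)). i \<in> b} = {q\<in>PM 1. ?R q}"
  proof (rule set_eqI)
    fix q :: "'a set \<times> 'a set"
    obtain a b where q: "q = (a,b)" by (cases q)
    show "q \<in> {a\<in>lay l (insert i T). i \<in> a} \<times> {b\<in>lay l (insert i (Tb i T)). i \<in> b} \<longleftrightarrow> q \<in> {q\<in>PM 1. ?R q}"
    proof
      assume h: "q \<in> {a\<in>lay l (insert i T). i \<in> a} \<times> {b\<in>lay l (insert i (Tb i T)). i \<in> b}"
      then have "a \<inter> b = {i}" unfolding q lay_def Tb_def by auto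
      then show "q \<in> {q\<in>PM 1. ?R q}"
        using h T unfolding q lay_def PM_def Tb_def by auto
    qed (auto simp: q lay_def PM_def)
  qed
  have "Z1 l h1 (fst p) (snd p) * Z1 l h2 (fst p) (Tb (fst p) (snd p))
      = (\<Sum>a\<in>{a\<in>lay l (insert i T). i \<in> a}. \<Sum>b\<in>{b\<in>lay l (insert i (Tb i T)). i \<in> b}. h1 a * h2 b)"
    unfolding pe Z1_def by (simp add: sum_product)
  also have "\<dots> = (\<Sum>q\<in>{a\<in>lay l (insert i T). i \<in> a} \<times> {b\<in>lay l (insert i (Tb i T)). i \<in> b}. h1 (fst q) * h2 (snd q))"
    by (simp add: sum.cartesian_product case_prod_beta)
  also have "\<dots> = (\<Sum>q\<in>{q\<in>PM 1. ?R q}. h1 (fst q) * h2 (snd q))"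
    by (simp only: seq)
  also have "\<dots> = (\<Sum>q\<in>PM 1. if fst p \<in> fst q \<and> fst p \<in> snd q \<and> fst q \<subseteq> insert (fst p) (snd p) \<and> snd q \<subseteq> insert (fst p) (Tb (fst p) (snd p))
        then h1 (fst q) * h2 (snd q) else 0)"
    unfolding pe using finite_PM by (simp add: sum.inter_filter)
  finally show "Z1 l h1 (fst p) (snd p) * Z1 l h2 (fst p) (Tb (fst p) (snd p)) =
      (\<Sum>q\<in>PM 1. if fst p \<in> fst q \<and> fst p \<in> snd q \<and> fst q \<subseteq> insert (fst p) (snd p) \<and> snd q \<subseteq> insert (fst p) (Tb (fst p) (snd p))
        then h1 (fst q) * h2 (snd q) else 0)" .
next
  fix q assume "q \<in> PM 1"
  then show "card {p\<in>TT. fst p \<in> fst q \<and> fst p \<in> snd q \<and> fst q \<subseteq> insert (fst p) (snd p) \<and> snd q \<subseteq> insert (fst p) (Tb (fst p) (snd p))}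
      = (2*l) choose l"
    using count_B[of "fst q" "snd q"] by simp
qed

lemma group_D:
  "(\<Sum>p\<in>TT. G (fst p) (snd p)) = (\<Sum>D\<in>lay (2*l) N. \<Sum>i\<in>D. G i (D - {i}))"
proof -
  have fin: "finite (lay (2*l) N)" using finN by (rule finite_lay)
  have "(\<Sum>D\<in>lay (2*l) N. \<Sum>i\<in>D. G i (D - {i})) = (\<Sum>x\<in>Sigma (lay (2*l) N) (\<lambda>D. D). G (snd x) (fst x - {snd x}))"
    using fin finN by (subst sum.Sigma) (auto simp: lay_def case_prod_beta intro: finite_subset)
  also have "\<dots> = (\<Sum>p\<in>TT. G (fst p) (snd p))"
  proof (rule sum.reindex_bij_witness[where i="\<lambda>p. (insert (fst p) (snd p), fst p)" and j="\<lambda>x. (snd x, fst x - {snd x})"])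
    fix x assume x: "x \<in> Sigma (lay (2*l) N) (\<lambda>D. D)"
    then have D: "fst x \<subseteq> N" "card (fst x) = 2*l" "snd x \<in> fst x" by (auto simp: lay_def)
    have fD: "finite (fst x)" using D finN finite_subset by blast
    show "(insert (fst (snd x, fst x - {snd x})) (snd (snd x, fst x - {snd x})), fst (snd x, fst x - {snd x})) = x"
      using D by (cases x) auto
    show "(snd x, fst x - {snd x}) \<in> TT" using D fD by (auto simp: TT_def)
    show "G (fst (snd x, fst x - {snd x})) (snd (snd x, fst x - {snd x})) = G (snd x) (fst x - {snd x})" by simp
  next
    fix p assume p: "p \<in> TT"
    then have T: "fst p \<in> N" "snd p \<subseteq> N - {fst p}" "card (snd p) = 2*l-1" by (auto simp: TT_def)
    have fT: "finite (snd p)" using T finN finite_subset by blast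
    show "(snd (insert (fst p) (snd p), fst p), fst (insert (fst p) (snd p), fst p) - {snd (insert (fst p) (snd p), fst p)}) = p"
      using T by (cases p) auto
    have "fst p \<notin> snd p" using T by auto
    then have "card (insert (fst p) (snd p)) = 2*l" using T fT l1 by simp
    then show "(insert (fst p) (snd p), fst p) \<in> Sigma (lay (2*l) N) (\<lambda>D. D)"
      using T by (auto simp: lay_def)
  qed
  finally show ?thesis by simp
qed

lemma card_TT: "card TT = 2*l * card (lay (2*l) N)"
proof -
  have "real (card TT) = (\<Sum>p\<in>TT. (\<lambda>i T. 1::real) (fst p) (snd p))" by simp
  also have "\<dots> = (\<Sum>D\<in>lay (2*l) N. \<Sum>i\<in>D. (1::real))" by (rule group_D)
  also have "\<dots> = (\<Sum>D\<in>lay (2*l) N. real (2*l))"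
    by (rule sum.cong) (auto simp: lay_def)
  finally have "real (card TT) = real (2*l * card (lay (2*l) N))" by simp
  then show ?thesis by (simp only: of_nat_eq_iff)
qed

end


lemma binom_lower: "4^l \<le> (2*l+1) * ((2*l) choose l)"
proof -
  have "(4::nat)^l = 2^(2*l)" by (simp add: power_mult)
  also have "\<dots> = (\<Sum>k\<le>2*l. (2*l) choose k)" by (simp add: choose_row_sum)
  also have "\<dots> \<le> (\<Sum>k\<le>2*l. (2*l) choose l)" by (intro sum_mono binomial_maximum')
  also have "\<dots> = (2*l+1) * ((2*l) choose l)" by simp
  finally show ?thesis .
qed

lemma binom_ln: "2*real l * ln 2 \<le> ln (2*real l+1) + ln (real ((2*l) choose l))"
proof -
  have pos: "0 < (2*l) choose l" by simp
  have "real (4^l) \<le> real ((2*l+1) * ((2*l) choose l))" using binom_lower by (simp only: of_nat_le_iff)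
  moreover have p1: "0 < real (4^l)" by simp
  moreover have p2: "0 < real ((2*l+1) * ((2*l) choose l))" using pos by (simp only: of_nat_0_less_iff) simp
  ultimately have "ln (real (4^l)) \<le> ln (real ((2*l+1) * ((2*l) choose l)))"
    by (simp only: ln_le_cancel_iff)
  moreover have "ln (real (4^l)) = 2*real l * ln 2"
  proof -
    have "ln (real (4^l)) = real l * ln 4" by (simp add: ln_realpow)
    moreover have "ln (4::real) = 2 * ln 2"
      using ln_realpow[of 2 2] by simp
    ultimately show ?thesis by simp
  qed
  moreover have "ln (real ((2*l+1) * ((2*l) choose l))) = ln (2*real l+1) + ln (real ((2*l) choose l))"
  proof -
    have "real ((2*l+1) * ((2*l) choose l)) = (2*real l+1) * real ((2*l) choose l)" by (simp add: algebra_simps)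
    moreover have "0 < 2*real l+1" by simp
    moreover have "0 < real ((2*l) choose l)" using pos by simp
    ultimately show ?thesis by (simp add: ln_mult)
  qed
  ultimately show ?thesis by simp
qed

lemma binom_double: "1 \<le> l \<Longrightarrow> (2*l) choose l = 2 * ((2*l-1) choose l)"
proof -
  assume l: "1 \<le> l"
  obtain m where m: "l = Suc m" using l by (cases l) auto
  have "(2*l) choose l = Suc (2*m+1) choose Suc m" by (simp add: m)
  also have "\<dots> = ((2*m+1) choose m) + ((2*m+1) choose Suc m)" by simp
  also have "(2*m+1) choose m = (2*m+1) choose Suc m"
    using binomial_symmetric[of m "2*m+1"] by (simp add: Suc_diff_le)
  finally show ?thesis by (simp add: m)
qed

context DS begin

definition cc :: nat where "cc = (2*l-1) choose l"
definition kap :: "real \<Rightarrow> real" where "kap \<epsilon> = \<epsilon>^2 * real l / 16 - ln (2*real l+1)"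

lemma D_facts:
  assumes D: "D \<in> lay (2*l) N" and i: "i \<in> D"
  shows "lay l (D - {i}) = {a\<in>lay l D. i \<notin> a}" "insert i (D - {i}) = D" "Tb i (D - {i}) = N - D"
  using D i by (auto simp: lay_def Tb_def)

lemma sum_not_in:
  assumes D: "D \<in> lay (2*l) N"
  shows "(\<Sum>i\<in>D. sum h {a\<in>lay l D. i \<notin> a}) = real l * sum h (lay l D)"
proof -
  have fD: "finite D" using D finN finite_subset by (auto simp: lay_def)
  have cD: "card D = 2*l" using D by (auto simp: lay_def)
  show ?thesis
  proof (rule double_count[OF fD finite_lay[OF fD]])
    fix i assume "i \<in> D"
    show "sum h {a\<in>lay l D. i \<notin> a} = (\<Sum>a\<in>lay l D. if i \<notin> a then h a else 0)"
      using finite_lay[OF fD] by (rule sum.inter_filter)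
  next
    fix a assume a: "a \<in> lay l D"
    then have "{i\<in>D. i \<notin> a} = D - a" by auto
    moreover have "card (D - a) = l"
    proof -
      have aD: "a \<subseteq> D" "card a = l" using a by (auto simp: lay_def)
      then have "finite a" using fD finite_subset by blast
      then have "card (D - a) = card D - card a" using aD by (simp add: card_Diff_subset)
      then show ?thesis using aD cD by simp
    qed
    ultimately show "card {i\<in>D. i \<notin> a} = l" by simp
  qed
qed

lemma card_compl: "D \<in> lay (2*l) N \<Longrightarrow> card (lay l (N - D)) = cc"
proof -
  assume D: "D \<in> lay (2*l) N"
  then have "D \<subseteq> N" by (auto simp: lay_def)
  then have "finite D" using finN finite_subset by blast
  then have "card (N - D) = card N - card D" using \<open>D \<subseteq> N\<close> by (simp add: card_Diff_subset)
  then have "card (N - D) = 2*l - 1" using D cardN by (auto simp: lay_def)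
  then show ?thesis using finN by (simp add: card_lay cc_def)
qed

lemma per_D:
  fixes h1 h2 :: "'a set \<Rightarrow> real" and \<epsilon> M :: real
  assumes D: "D \<in> lay (2*l) N"
    and h1pos: "\<And>a. a \<subseteq> N \<Longrightarrow> 0 \<le> h1 a" and h2pos: "\<And>a. a \<subseteq> N \<Longrightarrow> 0 \<le> h2 a"
    and hM: "\<And>q. q \<in> PM 0 \<Longrightarrow> h1 (fst q) * h2 (snd q) \<le> M" and M0: "0 \<le> M"
    and eps: "0 < \<epsilon>" "\<epsilon> < 1"
  shows "(\<Sum>i\<in>D. max 0 ((1-\<epsilon>/4) * Z0 l h1 (D - {i}) - Z1 l h1 i (D - {i}))) * Z0 l h2 (N - D)
     \<le> \<epsilon> * real l / 4 * sum h1 (lay l D) * Z0 l h2 (N - D)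
        + real l * real cc * real ((2*l) choose l) * M * exp (- kap \<epsilon>)"
proof -
  define K where "K = lay l D"
  define F where "F = sum h1 K"
  define Q where "Q = Z0 l h2 (N - D)"
  define S1 where "S1 i = sum h1 {a\<in>K. i \<in> a}" for i
  define Cb where "Cb = real ((2*l) choose l)"
  have DN: "D \<subseteq> N" and cD: "card D = 2*l" using D by (auto simp: lay_def)
  have fD: "finite D" using DN finN finite_subset by blast
  have finK: "finite K" unfolding K_def using fD by (rule finite_lay)
  have KN: "a \<in> K \<Longrightarrow> a \<subseteq> N" for a using DN by (auto simp: K_def lay_def)
  have Z0i: "Z0 l h1 (D - {i}) = F - S1 i" if "i \<in> D" for i
  proof -
    have "Z0 l h1 (D - {i}) = sum h1 {a\<in>K. i \<notin> a}" using D_facts[OF D that] by (simp add: Z0_def K_def)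
    then show ?thesis using sum_split_mem[OF finK, of h1 "\<lambda>a. i \<in> a"] by (simp add: F_def S1_def)
  qed
  have Z1i: "Z1 l h1 i (D - {i}) = S1 i" if "i \<in> D" for i
    using D_facts[OF D that] by (simp add: Z1_def S1_def K_def)
  have LHS: "(\<Sum>i\<in>D. max 0 ((1-\<epsilon>/4) * Z0 l h1 (D - {i}) - Z1 l h1 i (D - {i})))
      = (\<Sum>i\<in>D. max 0 ((1-\<epsilon>/4) * (F - S1 i) - S1 i))"
    by (rule sum.cong) (auto simp: Z0i Z1i)
  have Q0: "0 \<le> Q" unfolding Q_def Z0_def by (rule sum_nonneg) (use h2pos in \<open>auto simp: lay_def\<close>)
  have F0: "0 \<le> F" unfolding F_def by (rule sum_nonneg) (use h1pos KN in auto)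
  have S1nn: "0 \<le> S1 i" for i unfolding S1_def by (rule sum_nonneg) (use h1pos KN in auto)
  have S1le: "S1 i \<le> F" for i unfolding S1_def F_def using finK h1pos KN by (intro sum_mono2) auto
  have RHS0: "0 \<le> real l * real cc * Cb * M * exp (- kap \<epsilon>)" using M0 by (simp add: Cb_def)
  have sumNot: "(\<Sum>i\<in>D. F - S1 i) = real l * F"
  proof -
    have "(\<Sum>i\<in>D. F - S1 i) = (\<Sum>i\<in>D. sum h1 {a\<in>lay l D. i \<notin> a})"
      using sum_split_mem[OF finK, of h1] by (intro sum.cong) (auto simp: F_def S1_def K_def algebra_simps)
    also have "\<dots> = real l * F" using sum_not_in[OF D] by (simp add: F_def K_def)
    finally show ?thesis .
  qed
  show ?thesis
  proof (cases "F = 0")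
    case True
    then have "S1 i = 0" for i using S1nn[of i] S1le[of i] by simp
    then have "(\<Sum>i\<in>D. max 0 ((1-\<epsilon>/4) * (F - S1 i) - S1 i)) = 0" using True by simp
    then show ?thesis unfolding LHS using RHS0 True by (simp add: F_def K_def Cb_def)
  next
    case False
    then have Fp: "0 < F" using F0 by simp
    have Kne: "K \<noteq> {}" using Fp by (auto simp: F_def)
    define Mh where "Mh = Max (h1 ` K)"
    have hMh: "a \<in> K \<Longrightarrow> h1 a \<le> Mh" for a unfolding Mh_def using finK by simp
    have "Mh \<in> h1 ` K" unfolding Mh_def using finK Kne by (intro Max_in) auto
    then obtain a0 where a0: "a0 \<in> K" "h1 a0 = Mh" by auto
    have "F \<le> (\<Sum>a\<in>K. Mh)" unfolding F_def using hMh by (rule sum_mono)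
    then have Mhp: "0 < Mh" using Fp by (cases "Mh \<le> 0") (auto, smt (verit) mult_nonneg_nonpos of_nat_0_le_iff)
    have MhQ: "Mh * Q \<le> real cc * M"
    proof -
      have "Mh * Q = (\<Sum>b\<in>lay l (N - D). h1 a0 * h2 b)" by (simp add: Q_def Z0_def a0 sum_distrib_left)
      also have "\<dots> \<le> (\<Sum>b\<in>lay l (N - D). M)"
      proof (rule sum_mono)
        fix b assume b: "b \<in> lay l (N - D)"
        have "a0 \<inter> b = {}" using a0(1) b by (auto simp: K_def lay_def)
        then have "(a0, b) \<in> PM 0" using a0(1) b DN by (auto simp: K_def lay_def PM_def)
        then show "h1 a0 * h2 b \<le> M" using hM by fastforce
      qed
      also have "\<dots> = real cc * M" using card_compl[OF D] by simp
      finally show ?thesis .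
    qed
    have LB: "(\<Sum>i\<in>D. max 0 ((1-\<epsilon>/4)*(F - S1 i) - S1 i)) \<le> 4 * F / \<epsilon> * (2*real l * ln 2 + ln (Mh / F))"
    proof -
      have "(\<Sum>i\<in>D. max 0 ((1-\<epsilon>/4)*(sum h1 K - sum h1 {a\<in>K. i\<in>a}) - sum h1 {a\<in>K. i\<in>a}))
          \<le> 4 * sum h1 K / \<epsilon> * (real (card D) * ln 2 + ln (Mh / sum h1 K))"
        by (rule local_bound[where D=D and K=K and h=h1 and Mh=Mh and \<epsilon>=\<epsilon>])
          (use fD KN h1pos hMh Fp eps in \<open>auto simp: K_def lay_def F_def\<close>)
      then show ?thesis using cD by (simp add: F_def S1_def)
    qed
    have BL: "2*real l * ln 2 \<le> ln (2*real l+1) + ln Cb" unfolding Cb_def by (rule binom_ln)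
    have Cbp: "0 < Cb" by (simp add: Cb_def)
    show ?thesis
    proof (cases "ln (Mh * Cb / F) \<le> kap \<epsilon>")
      case True
      have "ln (Mh * Cb / F) = ln Mh + ln Cb - ln F" using Mhp Cbp Fp by (simp add: ln_div ln_mult)
      moreover have "ln (Mh / F) = ln Mh - ln F" using Mhp Fp by (simp add: ln_div)
      ultimately have "2*real l * ln 2 + ln (Mh / F) \<le> \<epsilon>^2 * real l / 16"
        using True BL by (simp add: kap_def)
      then have "4 * F / \<epsilon> * (2*real l * ln 2 + ln (Mh / F)) \<le> 4 * F / \<epsilon> * (\<epsilon>^2 * real l / 16)"
        using Fp eps by (intro mult_left_mono) auto
      also have "\<dots> = \<epsilon> * real l / 4 * F" using eps by (simp add: power2_eq_square field_simps)
      finally have "(\<Sum>i\<in>D. max 0 ((1-\<epsilon>/4)*(F - S1 i) - S1 i)) * Q \<le> \<epsilon> * real l / 4 * F * Q"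
        using LB Q0 by (intro mult_right_mono) auto
      then show ?thesis unfolding LHS using RHS0 by (simp add: F_def K_def Q_def Cb_def)
    next
      case False
      then have "exp (kap \<epsilon>) < Mh * Cb / F" using Mhp Cbp Fp
        by (metis divide_pos_pos exp_less_cancel_iff exp_ln mult_pos_pos not_le)
      then have "F * exp (kap \<epsilon>) < Mh * Cb" using Fp by (simp add: field_simps)
      then have Fsmall: "F \<le> Mh * Cb * exp (- kap \<epsilon>)" by (simp add: exp_minus field_simps)
      have "(\<Sum>i\<in>D. max 0 ((1-\<epsilon>/4)*(F - S1 i) - S1 i)) \<le> (\<Sum>i\<in>D. F - S1 i)"
      proof (rule sum_mono)
        fix i
        have "(1-\<epsilon>/4)*(F - S1 i) \<le> F - S1 i" using eps S1le[of i] by (simp add: mult_left_le_one_le)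
        then show "max 0 ((1-\<epsilon>/4)*(F - S1 i) - S1 i) \<le> F - S1 i" using S1nn[of i] S1le[of i] by simp
      qed
      also have "\<dots> = real l * F" by (rule sumNot)
      finally have "(\<Sum>i\<in>D. max 0 ((1-\<epsilon>/4)*(F - S1 i) - S1 i)) * Q \<le> real l * F * Q"
        using Q0 by (intro mult_right_mono) auto
      also have "\<dots> \<le> real l * (Mh * Cb * exp (- kap \<epsilon>)) * Q"
        using Fsmall Q0 by (intro mult_right_mono mult_left_mono) auto
      also have "\<dots> = real l * Cb * exp (- kap \<epsilon>) * (Mh * Q)" by (simp add: algebra_simps)
      also have "\<dots> \<le> real l * Cb * exp (- kap \<epsilon>) * (real cc * M)"
        using MhQ Cbp by (intro mult_left_mono) auto
      finally have X: "(\<Sum>i\<in>D. max 0 ((1-\<epsilon>/4)*(F - S1 i) - S1 i)) * Q \<le> real l * real cc * Cb * M * exp (- kap \<epsilon>)"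
        by (simp add: algebra_simps)
      have "0 \<le> \<epsilon> * real l / 4 * F * Q" using eps F0 Q0 by simp
      then show ?thesis unfolding LHS using X by (simp add: F_def K_def Q_def Cb_def)
    qed
  qed
qed

end


lemma pointwise:
  fixes p0 q0 p1 q1 \<alpha> :: real
  assumes "0 \<le> p0" "0 \<le> q0" "0 \<le> p1" "0 \<le> q1" "0 \<le> \<alpha>"
  shows "\<alpha>^2 * (p0 * q0) - \<alpha> * (max 0 (\<alpha>*p0 - p1) * q0 + max 0 (\<alpha>*q0 - q1) * p0) \<le> p1 * q1"
proof -
  define u where "u = max 0 (\<alpha>*p0 - p1)"
  define v where "v = max 0 (\<alpha>*q0 - q1)"
  have u: "0 \<le> \<alpha>*p0 - u" "\<alpha>*p0 - u \<le> p1" "0 \<le> u" using assms by (auto simp: u_def)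
  have v: "0 \<le> \<alpha>*q0 - v" "\<alpha>*q0 - v \<le> q1" "0 \<le> v" using assms by (auto simp: v_def)
  have "(\<alpha>*p0 - u) * (\<alpha>*q0 - v) \<le> p1 * q1" using u v by (intro mult_mono) auto
  moreover have "(\<alpha>*p0 - u) * (\<alpha>*q0 - v) = \<alpha>^2 * (p0 * q0) - \<alpha> * (u * q0 + v * p0) + u * v"
    by (simp add: power2_eq_square algebra_simps)
  moreover have "0 \<le> u * v" using u v by simp
  ultimately show ?thesis unfolding u_def[symmetric] v_def[symmetric] by linarith
qed

context DS begin

lemma sigma_TT:
  assumes p: "p \<in> TT"
  shows "(fst p, Tb (fst p) (snd p)) \<in> TT" "(fst p, Tb (fst p) (Tb (fst p) (snd p))) = p"
proof -
  have T: "fst p \<in> N" "snd p \<subseteq> N - {fst p}" "card (snd p) = 2*l-1" using p by (auto simp: TT_def)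
  show "(fst p, Tb (fst p) (Tb (fst p) (snd p))) = p"
    using T by (cases p) (auto simp: Tb_def)
  have fT: "finite (snd p)" using T finN finite_subset by blast
  have "card (N - {fst p} - snd p) = card (N - {fst p}) - card (snd p)"
    using T fT by (intro card_Diff_subset) auto
  moreover have "card (N - {fst p}) = card N - 1" using T finN by simp
  ultimately have "card (Tb (fst p) (snd p)) = 2*l - 1" using T cardN l1 by (simp add: Tb_def)
  then show "(fst p, Tb (fst p) (snd p)) \<in> TT" using T by (auto simp: TT_def Tb_def)
qed

lemma Tb_Tb: "(a,b) \<in> TT \<Longrightarrow> Tb a (Tb a b) = b"
  using sigma_TT(2)[of "(a,b)"] by simp

lemma swap_TT:
  "(\<Sum>p\<in>TT. G (fst p) (snd p)) = (\<Sum>p\<in>TT. G (fst p) (Tb (fst p) (snd p)))"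
  by (rule sum.reindex_bij_witness[where i="\<lambda>p. (fst p, Tb (fst p) (snd p))" and j="\<lambda>p. (fst p, Tb (fst p) (snd p))"])
     (auto simp: sigma_TT Tb_Tb)

lemma side:
  fixes h1 h2 :: "'a set \<Rightarrow> real" and \<epsilon> M :: real
  assumes h1pos: "\<And>a. a \<subseteq> N \<Longrightarrow> 0 \<le> h1 a" and h2pos: "\<And>a. a \<subseteq> N \<Longrightarrow> 0 \<le> h2 a"
    and hM: "\<And>q. q \<in> PM 0 \<Longrightarrow> h1 (fst q) * h2 (snd q) \<le> M" and M0: "0 \<le> M"
    and eps: "0 < \<epsilon>" "\<epsilon> < 1"
  shows "(\<Sum>p\<in>TT. max 0 ((1-\<epsilon>/4) * Z0 l h1 (snd p) - Z1 l h1 (fst p) (snd p)) * Z0 l h2 (Tb (fst p) (snd p)))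
    \<le> \<epsilon>/4 * (\<Sum>p\<in>TT. Z0 l h1 (snd p) * Z0 l h2 (Tb (fst p) (snd p)))
       + real (card TT) * real cc ^ 2 * M * exp (- kap \<epsilon>)"
proof -
  define Lay where "Lay = lay (2*l) N"
  define E where "E = exp (- kap \<epsilon>)"
  have L: "(\<Sum>p\<in>TT. max 0 ((1-\<epsilon>/4) * Z0 l h1 (snd p) - Z1 l h1 (fst p) (snd p)) * Z0 l h2 (Tb (fst p) (snd p)))
     = (\<Sum>D\<in>Lay. (\<Sum>i\<in>D. max 0 ((1-\<epsilon>/4) * Z0 l h1 (D - {i}) - Z1 l h1 i (D - {i}))) * Z0 l h2 (N - D))"
    unfolding Lay_def
    by (subst group_D[where G="\<lambda>i T. max 0 ((1-\<epsilon>/4) * Z0 l h1 T - Z1 l h1 i T) * Z0 l h2 (Tb i T)"])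
       (auto simp: sum_distrib_right D_facts intro!: sum.cong)
  have R: "(\<Sum>p\<in>TT. Z0 l h1 (snd p) * Z0 l h2 (Tb (fst p) (snd p)))
     = (\<Sum>D\<in>Lay. real l * sum h1 (lay l D) * Z0 l h2 (N - D))"
  proof -
    have "(\<Sum>p\<in>TT. Z0 l h1 (snd p) * Z0 l h2 (Tb (fst p) (snd p)))
       = (\<Sum>D\<in>Lay. \<Sum>i\<in>D. Z0 l h1 (D - {i}) * Z0 l h2 (Tb i (D - {i})))"
      unfolding Lay_def by (rule group_D[where G="\<lambda>i T. Z0 l h1 T * Z0 l h2 (Tb i T)"])
    also have "\<dots> = (\<Sum>D\<in>Lay. (\<Sum>i\<in>D. sum h1 {a\<in>lay l D. i \<notin> a}) * Z0 l h2 (N - D))"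
      unfolding Lay_def by (auto simp: sum_distrib_right D_facts Z0_def intro!: sum.cong)
    also have "\<dots> = (\<Sum>D\<in>Lay. real l * sum h1 (lay l D) * Z0 l h2 (N - D))"
      unfolding Lay_def by (auto simp: sum_not_in intro!: sum.cong)
    finally show ?thesis .
  qed
  have "(\<Sum>D\<in>Lay. (\<Sum>i\<in>D. max 0 ((1-\<epsilon>/4) * Z0 l h1 (D - {i}) - Z1 l h1 i (D - {i}))) * Z0 l h2 (N - D))
     \<le> (\<Sum>D\<in>Lay. \<epsilon> * real l / 4 * sum h1 (lay l D) * Z0 l h2 (N - D)
        + real l * real cc * real ((2*l) choose l) * M * E)"
    unfolding Lay_def E_def by (intro sum_mono per_D) (use assms in auto)
  also have "\<dots> = (\<Sum>D\<in>Lay. \<epsilon>/4 * (real l * sum h1 (lay l D) * Z0 l h2 (N - D)))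
        + (\<Sum>D\<in>Lay. real l * real cc * real ((2*l) choose l) * M * E)"
    by (simp only: sum.distrib[symmetric]) (rule sum.cong, simp_all)
  also have "\<dots> = \<epsilon>/4 * (\<Sum>D\<in>Lay. real l * sum h1 (lay l D) * Z0 l h2 (N - D))
        + real (card Lay) * (real l * real cc * real ((2*l) choose l) * M * E)"
  proof -
    have "(\<Sum>D\<in>Lay. \<epsilon>/4 * (real l * sum h1 (lay l D) * Z0 l h2 (N - D)))
        = \<epsilon>/4 * (\<Sum>D\<in>Lay. real l * sum h1 (lay l D) * Z0 l h2 (N - D))"
      by (rule sum_distrib_left[symmetric])
    moreover have "(\<Sum>D\<in>Lay. real l * real cc * real ((2*l) choose l) * M * E)
        = real (card Lay) * (real l * real cc * real ((2*l) choose l) * M * E)" by simp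
    ultimately show ?thesis by (rule arg_cong2[where f="(+)"])
  qed
  also have "real (card Lay) * (real l * real cc * real ((2*l) choose l) * M * E)
      = real (card TT) * real cc ^ 2 * M * E"
  proof -
    have "real ((2*l) choose l) = 2 * real cc" using binom_double[OF l1] by (simp add: cc_def)
    moreover have "real (card TT) = 2 * real l * real (card Lay)" using card_TT by (simp add: Lay_def)
    ultimately show ?thesis by (simp add: power2_eq_square algebra_simps)
  qed
  finally show ?thesis using L R by (simp add: E_def)
qed

lemma card_Z1_one:
  assumes "i \<notin> T" "finite T" "card T = 2*l - 1"
  shows "card {a\<in>lay l (insert i T). i \<in> a} = cc"
proof -
  have "{a\<in>lay l (insert i T). i \<in> a} = {S. {i} \<subseteq> S \<and> S \<subseteq> insert i T \<and> card S = card {i} + (l-1)}"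
    using l1 by (auto simp: lay_def)
  moreover have "card (insert i T - {i}) = 2*l-1" using assms by simp
  ultimately have "card {a\<in>lay l (insert i T). i \<in> a} = (2*l-1) choose (l-1)"
    using card_supsets[of "insert i T" "{i}" "l-1"] assms by simp
  also have "\<dots> = cc" unfolding cc_def using binomial_symmetric[of "l-1" "2*l-1"] l1
    by (simp add: diff_diff_left)
  finally show ?thesis .
qed

lemma TT_props:
  assumes "p \<in> TT"
  shows "card (lay l (snd p)) = cc" "card (lay l (Tb (fst p) (snd p))) = cc"
    "card {a\<in>lay l (insert (fst p) (snd p)). fst p \<in> a} = cc"
    "card {a\<in>lay l (insert (fst p) (Tb (fst p) (snd p))). fst p \<in> a} = cc"
proof -
  have T: "fst p \<in> N" "snd p \<subseteq> N - {fst p}" "card (snd p) = 2*l-1" using assms by (auto simp: TT_def)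
  have fT: "finite (snd p)" using T finN finite_subset by blast
  have "card (N - {fst p} - snd p) = card (N - {fst p}) - card (snd p)"
    using T fT by (intro card_Diff_subset) auto
  moreover have "card (N - {fst p}) = card N - 1" using T finN by simp
  ultimately have cTb: "card (Tb (fst p) (snd p)) = 2*l - 1" using T cardN l1 by (simp add: Tb_def)
  have fTb: "finite (Tb (fst p) (snd p))" using finN by (simp add: Tb_def)
  show "card (lay l (snd p)) = cc" using fT T by (simp add: card_lay cc_def)
  show "card (lay l (Tb (fst p) (snd p))) = cc" using fTb cTb by (simp add: card_lay cc_def)
  show "card {a\<in>lay l (insert (fst p) (snd p)). fst p \<in> a} = cc" using T fT by (intro card_Z1_one) auto
  show "card {a\<in>lay l (insert (fst p) (Tb (fst p) (snd p))). fst p \<in> a} = cc"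
    using fTb cTb by (intro card_Z1_one) (auto simp: Tb_def)
qed

lemma TT_pos: "0 < card TT"
proof -
  have "2*l \<le> card N" using cardN l1 by simp
  then obtain D where "D \<subseteq> N" "card D = 2*l" using obtain_subset_with_card_n by metis
  then have "D \<in> lay (2*l) N" by (simp add: lay_def)
  then have "lay (2*l) N \<noteq> {}" by auto
  then have "0 < card (lay (2*l) N)" using finite_lay[OF finN] by (simp add: card_gt_0_iff)
  then show ?thesis using card_TT l1 by simp
qed

lemma cc_pos: "0 < cc" using l1 by (simp add: cc_def)

lemma main_ineq:
  fixes h1 h2 :: "'a set \<Rightarrow> real" and \<epsilon> M :: real
  assumes h1pos: "\<And>a. a \<subseteq> N \<Longrightarrow> 0 \<le> h1 a" and h2pos: "\<And>a. a \<subseteq> N \<Longrightarrow> 0 \<le> h2 a"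
    and hM: "\<And>q. q \<in> PM 0 \<Longrightarrow> h1 (fst q) * h2 (snd q) \<le> M" and M0: "0 \<le> M"
    and eps: "0 < \<epsilon>" "\<epsilon> < 1"
  shows "(1-\<epsilon>) * ((\<Sum>q\<in>PM 0. h1 (fst q) * h2 (snd q)) / real (card (PM 0)))
       - (\<Sum>q\<in>PM 1. h1 (fst q) * h2 (snd q)) / real (card (PM 1)) \<le> 2 * M * exp (- kap \<epsilon>)"
proof -
  define W where "W = real (card TT) * real cc ^ 2"
  define \<alpha> where "\<alpha> = 1 - \<epsilon>/4"
  define E where "E = exp (- kap \<epsilon>)"
  define KA where "KA = real ((2*l-1) * ((2*l-2) choose (l-1)))"
  define KB where "KB = real ((2*l) choose l)"
  define S where "S = (\<Sum>p\<in>TT. Z0 l h1 (snd p) * Z0 l h2 (Tb (fst p) (snd p)))"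
  define SB where "SB = (\<Sum>p\<in>TT. Z1 l h1 (fst p) (snd p) * Z1 l h2 (fst p) (Tb (fst p) (snd p)))"
  have Wp: "0 < W" using TT_pos cc_pos by (simp add: W_def)
  have WA: "W = KA * real (card (PM 0))"
  proof -
    have "(\<Sum>p\<in>TT. Z0 l (\<lambda>_. 1) (snd p) * Z0 l (\<lambda>_. 1) (Tb (fst p) (snd p))) = (\<Sum>p\<in>TT. real cc ^ 2)"
      by (rule sum.cong) (auto simp: Z0_def TT_props power2_eq_square)
    then show ?thesis using sum_A[of "\<lambda>_. 1" "\<lambda>_. 1"] by (simp add: W_def KA_def)
  qed
  have WB: "W = KB * real (card (PM 1))"
  proof -
    have "(\<Sum>p\<in>TT. Z1 l (\<lambda>_. 1) (fst p) (snd p) * Z1 l (\<lambda>_. 1) (fst p) (Tb (fst p) (snd p))) = (\<Sum>p\<in>TT. real cc ^ 2)"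
      by (rule sum.cong) (auto simp: Z1_def TT_props power2_eq_square)
    then show ?thesis using sum_B[of "\<lambda>_. 1" "\<lambda>_. 1"] by (simp add: W_def KB_def)
  qed
  have EA: "(\<Sum>q\<in>PM 0. h1 (fst q) * h2 (snd q)) / real (card (PM 0)) = S / W"
  proof -
    have "KA \<noteq> 0" using WA Wp by auto
    then show ?thesis using sum_A[of h1 h2] WA by (simp add: S_def KA_def)
  qed
  have EB: "(\<Sum>q\<in>PM 1. h1 (fst q) * h2 (snd q)) / real (card (PM 1)) = SB / W"
  proof -
    have "KB \<noteq> 0" using WB Wp by auto
    then show ?thesis using sum_B[of h1 h2] WB by (simp add: SB_def KB_def)
  qed
  have TN: "p \<in> TT \<Longrightarrow> snd p \<subseteq> N \<and> Tb (fst p) (snd p) \<subseteq> N \<and> insert (fst p) (snd p) \<subseteq> N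
      \<and> insert (fst p) (Tb (fst p) (snd p)) \<subseteq> N" for p
    by (auto simp: TT_def Tb_def)
  have Z0nn: "T \<subseteq> N \<Longrightarrow> (\<And>a. a \<subseteq> N \<Longrightarrow> 0 \<le> h a) \<Longrightarrow> 0 \<le> Z0 l h T" for T h
    unfolding Z0_def by (rule sum_nonneg) (auto simp: lay_def)
  have Z1nn: "insert i T \<subseteq> N \<Longrightarrow> (\<And>a. a \<subseteq> N \<Longrightarrow> 0 \<le> h a) \<Longrightarrow> 0 \<le> Z1 l h i T" for i T h
    unfolding Z1_def by (rule sum_nonneg) (auto simp: lay_def)
  define U where "U = (\<Sum>p\<in>TT. max 0 (\<alpha> * Z0 l h1 (snd p) - Z1 l h1 (fst p) (snd p)) * Z0 l h2 (Tb (fst p) (snd p)))"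
  define V where "V = (\<Sum>p\<in>TT. max 0 (\<alpha> * Z0 l h2 (Tb (fst p) (snd p)) - Z1 l h2 (fst p) (Tb (fst p) (snd p))) * Z0 l h1 (snd p))"
  have PW: "\<alpha>^2 * S - \<alpha> * (U + V) \<le> SB"
  proof -
    have "\<alpha>^2 * S - \<alpha> * (U + V) = (\<Sum>p\<in>TT. \<alpha>^2 * (Z0 l h1 (snd p) * Z0 l h2 (Tb (fst p) (snd p)))
        - \<alpha> * (max 0 (\<alpha> * Z0 l h1 (snd p) - Z1 l h1 (fst p) (snd p)) * Z0 l h2 (Tb (fst p) (snd p))
              + max 0 (\<alpha> * Z0 l h2 (Tb (fst p) (snd p)) - Z1 l h2 (fst p) (Tb (fst p) (snd p))) * Z0 l h1 (snd p)))"
      by (simp add: S_def U_def V_def sum_distrib_left sum_subtractf sum.distrib distrib_left)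
    also have "\<dots> \<le> SB" unfolding SB_def
      by (rule sum_mono, rule pointwise) (use TN Z0nn Z1nn h1pos h2pos eps in \<open>auto simp: \<alpha>_def\<close>)
    finally show ?thesis .
  qed
  have UB: "U \<le> \<epsilon>/4 * S + W * M * E"
    unfolding U_def S_def W_def E_def \<alpha>_def by (rule side) (use assms in auto)
  have VB: "V \<le> \<epsilon>/4 * S + W * M * E"
  proof -
    have "V = (\<Sum>p\<in>TT. max 0 ((1-\<epsilon>/4) * Z0 l h2 (snd p) - Z1 l h2 (fst p) (snd p)) * Z0 l h1 (Tb (fst p) (snd p)))"
    proof -
      let ?G = "\<lambda>i T. max 0 ((1-\<epsilon>/4) * Z0 l h2 T - Z1 l h2 i T) * Z0 l h1 (Tb i T)"
      have "V = (\<Sum>p\<in>TT. ?G (fst p) (Tb (fst p) (snd p)))"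
        unfolding V_def \<alpha>_def by (rule sum.cong) (auto simp: Tb_Tb)
      also have "\<dots> = (\<Sum>p\<in>TT. ?G (fst p) (snd p))" by (rule swap_TT[symmetric])
      finally show ?thesis by simp
    qed
    also have "\<dots> \<le> \<epsilon>/4 * (\<Sum>p\<in>TT. Z0 l h2 (snd p) * Z0 l h1 (Tb (fst p) (snd p))) + W * M * E"
      unfolding W_def E_def
    proof (rule side)
      fix q assume "q \<in> PM 0"
      then have "(snd q, fst q) \<in> PM 0" using PM_sym[of "fst q" "snd q"] by simp
      then show "h2 (fst q) * h1 (snd q) \<le> M" using hM[of "(snd q, fst q)"] by (simp add: mult.commute)
    qed (use assms in auto)
    also have "(\<Sum>p\<in>TT. Z0 l h2 (snd p) * Z0 l h1 (Tb (fst p) (snd p))) = S"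
      unfolding S_def
      by (subst swap_TT[where G="\<lambda>i T. Z0 l h2 T * Z0 l h1 (Tb i T)"]) (auto intro!: sum.cong simp: mult.commute Tb_Tb)
    finally show ?thesis .
  qed
  have S0: "0 \<le> S" unfolding S_def
    by (rule sum_nonneg) (use TN Z0nn h1pos h2pos in auto)
  have al: "0 \<le> \<alpha>" "\<alpha> \<le> 1" using eps by (auto simp: \<alpha>_def)
  have "(1-\<epsilon>) * S \<le> \<alpha>^2 * S - \<alpha> * (\<epsilon>/2 * S)"
  proof -
    have "1-\<epsilon> \<le> \<alpha>^2 - \<alpha> * (\<epsilon>/2)" using eps by (simp add: \<alpha>_def power2_eq_square algebra_simps)
    then have "(1-\<epsilon>) * S \<le> (\<alpha>^2 - \<alpha> * (\<epsilon>/2)) * S" using S0 by (rule mult_right_mono)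
    then show ?thesis by (simp add: algebra_simps)
  qed
  also have "\<dots> \<le> \<alpha>^2 * S - \<alpha> * (U + V) + \<alpha> * (2 * W * M * E)"
  proof -
    have "\<alpha> * (U + V) \<le> \<alpha> * (\<epsilon>/2 * S + 2 * W * M * E)" using UB VB al by (intro mult_left_mono) auto
    then show ?thesis by (simp add: algebra_simps)
  qed
  also have "\<dots> \<le> SB + 2 * W * M * E"
  proof -
    have "\<alpha> * (2 * W * M * E) \<le> 2 * W * M * E"
      using al Wp M0 by (intro mult_left_le_one_le) (auto simp: E_def)
    then show ?thesis using PW by linarith
  qed
  finally have "(1-\<epsilon>) * S - SB \<le> 2 * W * M * E" by simp
  then have "((1-\<epsilon>) * S - SB) / W \<le> 2 * M * E" using Wp by (simp add: field_simps)
  then show ?thesis unfolding EA EB E_def by (simp add: diff_divide_distrib)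
qed

end

lemma rhs_eq:
  fixes \<epsilon> C :: real and l :: nat
  assumes "1 \<le> l"
  shows "2 powr (- (\<epsilon>\<^sup>2 / (16 * ln 2)) * real l + C * log 2 (real l)) = exp (- (\<epsilon>^2 * real l / 16)) * exp (C * ln (real l))"
proof -
  have "2 powr (- (\<epsilon>\<^sup>2 / (16 * ln 2)) * real l + C * log 2 (real l))
      = exp ((- (\<epsilon>\<^sup>2 / (16 * ln 2)) * real l + C * log 2 (real l)) * ln 2)"
    by (simp add: powr_def)
  also have "(- (\<epsilon>\<^sup>2 / (16 * ln 2)) * real l + C * log 2 (real l)) * ln 2 = - (\<epsilon>^2 * real l / 16) + C * ln (real l)"
    by (simp add: log_def field_simps)
  finally show ?thesis by (simp add: mult_exp_exp algebra_simps)
qed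

theorem lemma4:
  shows "\<exists>C::real. \<forall>(n::nat) (\<mu>::(nat set \<times> nat set) pmf) (f::nat set \<Rightarrow> real)
           (g::nat set \<Rightarrow> real) (\<epsilon>::real).
     (let l = (n + 1) div 4; A = pairs_meet n l 0; B = pairs_meet n l 1;
          X = (\<lambda>(a, b). f a * g b) in
     n mod 4 = 3 \<longrightarrow>
     set_pmf \<mu> \<subseteq> A \<union> B \<longrightarrow>
     set_pmf \<mu> \<inter> A \<noteq> {} \<longrightarrow> set_pmf \<mu> \<inter> B \<noteq> {} \<longrightarrow>
     cond_pmf \<mu> A = pmf_of_set A \<longrightarrow> cond_pmf \<mu> B = pmf_of_set B \<longrightarrow>
     (\<forall>a. a \<subseteq> {1..n} \<longrightarrow> f a \<ge> 0) \<longrightarrow> (\<forall>b. b \<subseteq> {1..n} \<longrightarrow> g b \<ge> 0) \<longrightarrow>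
     0 < \<epsilon> \<longrightarrow> \<epsilon> < 1 \<longrightarrow>
     (1 - \<epsilon>) * measure_pmf.expectation (cond_pmf \<mu> A) X
       - measure_pmf.expectation (cond_pmf \<mu> B) X
     \<le> Max (X ` (A \<union> B)) *
        2 powr (- (\<epsilon>\<^sup>2 / (16 * ln 2)) * real l + C * log 2 (real l)))"
proof (rule exI[of _ 4], intro allI)
  fix n :: nat and \<mu> :: "(nat set \<times> nat set) pmf" and f g :: "nat set \<Rightarrow> real" and \<epsilon> :: real
  define l where "l = (n + 1) div 4"
  define A where "A = pairs_meet n l 0"
  define B where "B = pairs_meet n l 1"
  define X where "X = (\<lambda>(a, b). f a * g b :: real)"
  show "let l = (n + 1) div 4; A = pairs_meet n l 0; B = pairs_meet n l 1;
          X = (\<lambda>(a, b). f a * g b) in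
     n mod 4 = 3 \<longrightarrow>
     set_pmf \<mu> \<subseteq> A \<union> B \<longrightarrow>
     set_pmf \<mu> \<inter> A \<noteq> {} \<longrightarrow> set_pmf \<mu> \<inter> B \<noteq> {} \<longrightarrow>
     cond_pmf \<mu> A = pmf_of_set A \<longrightarrow> cond_pmf \<mu> B = pmf_of_set B \<longrightarrow>
     (\<forall>a. a \<subseteq> {1..n} \<longrightarrow> f a \<ge> 0) \<longrightarrow> (\<forall>b. b \<subseteq> {1..n} \<longrightarrow> g b \<ge> 0) \<longrightarrow>
     0 < \<epsilon> \<longrightarrow> \<epsilon> < 1 \<longrightarrow>
     (1 - \<epsilon>) * measure_pmf.expectation (cond_pmf \<mu> A) X
       - measure_pmf.expectation (cond_pmf \<mu> B) X
     \<le> Max (X ` (A \<union> B)) *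
        2 powr (- (\<epsilon>\<^sup>2 / (16 * ln 2)) * real l + 4 * log 2 (real l))"
    unfolding Let_def l_def[symmetric] A_def[symmetric] B_def[symmetric] X_def[symmetric]
  proof (intro impI)
    assume n3: "n mod 4 = 3" and "set_pmf \<mu> \<subseteq> A \<union> B" and
      An: "set_pmf \<mu> \<inter> A \<noteq> {}" and Bn: "set_pmf \<mu> \<inter> B \<noteq> {}" and
      cA: "cond_pmf \<mu> A = pmf_of_set A" and cB: "cond_pmf \<mu> B = pmf_of_set B" and
      fpos: "\<forall>a. a \<subseteq> {1..n} \<longrightarrow> f a \<ge> 0" and gpos: "\<forall>b. b \<subseteq> {1..n} \<longrightarrow> g b \<ge> 0" and
      eps: "0 < \<epsilon>" "\<epsilon> < 1"
    have nl: "n = 4*l - 1" "1 \<le> l" using n3 unfolding l_def by presburger+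
    interpret DS "{1..n}" l by unfold_locales (use nl in auto)
    have PMe: "PM k = pairs_meet n l k" for k unfolding PM_def pairs_meet_def by (rule refl)
    have PMe2: "DS.PM {Suc 0..n} l k = pairs_meet n l k" for k using PMe[of k] by simp
    have finA: "finite A" "finite B" unfolding A_def B_def PMe[symmetric] by (rule finite_PM)+
    have neA: "A \<noteq> {}" "B \<noteq> {}" using An Bn by auto
    have finAB: "finite (X ` (A \<union> B))" using finA by simp
    define M where "M = Max (X ` (A \<union> B))"
    have XM: "q \<in> A \<union> B \<Longrightarrow> X q \<le> M" for q unfolding M_def using finAB by simp
    have Xnn: "q \<in> A \<union> B \<Longrightarrow> 0 \<le> X q" for q
      using fpos gpos by (auto simp: X_def A_def B_def pairs_meet_def)
    have M0: "0 \<le> M" using neA XM Xnn by fastforce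
    have Xsplit: "X q = f (fst q) * g (snd q)" for q by (simp add: X_def case_prod_beta)
    have EA: "measure_pmf.expectation (cond_pmf \<mu> A) X = (\<Sum>q\<in>PM 0. f (fst q) * g (snd q)) / real (card (PM 0))"
      unfolding cA using finA neA by (simp add: integral_pmf_of_set Xsplit A_def PMe PMe2)
    have EB: "measure_pmf.expectation (cond_pmf \<mu> B) X = (\<Sum>q\<in>PM 1. f (fst q) * g (snd q)) / real (card (PM 1))"
      unfolding cB using finA neA by (simp add: integral_pmf_of_set Xsplit B_def PMe PMe2)
    have main: "(1-\<epsilon>) * ((\<Sum>q\<in>PM 0. f (fst q) * g (snd q)) / real (card (PM 0)))
       - (\<Sum>q\<in>PM 1. f (fst q) * g (snd q)) / real (card (PM 1)) \<le> 2 * M * exp (- kap \<epsilon>)"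
    proof (rule main_ineq)
      fix q assume "q \<in> PM 0"
      then show "f (fst q) * g (snd q) \<le> M" using XM[of q] by (simp add: Xsplit A_def PMe PMe2)
    qed (use fpos gpos M0 eps in auto)
    have EB0: "0 \<le> (\<Sum>q\<in>PM 1. f (fst q) * g (snd q)) / real (card (PM 1))"
      using Xnn by (intro divide_nonneg_nonneg sum_nonneg) (auto simp: Xsplit B_def PMe PMe2)
    have RHS: "2 powr (- (\<epsilon>\<^sup>2 / (16 * ln 2)) * real l + 4 * log 2 (real l))
        = exp (- (\<epsilon>^2 * real l / 16)) * real l ^ 4"
    proof -
      have lp: "0 < real l" using nl by simp
      then have "ln (real l ^ 4) = 4 * ln (real l)" by (simp add: ln_realpow)
      then have "exp (4 * ln (real l)) = exp (ln (real l ^ 4))" by simp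
      also have "\<dots> = real l ^ 4" using lp by simp
      finally have "exp (4 * ln (real l)) = real l ^ 4" .
      then show ?thesis using rhs_eq[OF nl(2), of \<epsilon> 4] by simp
    qed
    have key: "(1-\<epsilon>) * ((\<Sum>q\<in>PM 0. f (fst q) * g (snd q)) / real (card (PM 0)))
       - (\<Sum>q\<in>PM 1. f (fst q) * g (snd q)) / real (card (PM 1)) \<le> M * (exp (- (\<epsilon>^2 * real l / 16)) * real l ^ 4)"
    proof (cases "l = 1")
      case True
      have EAM: "(\<Sum>q\<in>PM 0. f (fst q) * g (snd q)) / real (card (PM 0)) \<le> M"
      proof -
        have "(\<Sum>q\<in>PM 0. f (fst q) * g (snd q)) \<le> (\<Sum>q\<in>PM 0. M)"
          using XM by (intro sum_mono) (auto simp: Xsplit A_def PMe PMe2)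
        moreover have "0 < card (PM 0)" using finA neA unfolding PMe by (simp add: A_def card_gt_0_iff)
        ultimately show ?thesis by (simp add: divide_le_eq mult.commute)
      qed
      have "1 - \<epsilon>^2/16 \<le> exp (- (\<epsilon>^2/16))" using exp_ge_add_one_self[of "- (\<epsilon>^2/16)"] by simp
      moreover have "1 - \<epsilon> \<le> 1 - \<epsilon>^2/16" using eps by (simp add: power2_eq_square mult_le_cancel_left1)
      ultimately have "1 - \<epsilon> \<le> exp (- (\<epsilon>^2 * real l / 16))" using True by simp
      then have "(1-\<epsilon>) * ((\<Sum>q\<in>PM 0. f (fst q) * g (snd q)) / real (card (PM 0))) \<le> exp (- (\<epsilon>^2 * real l / 16)) * M"
        using EAM eps M0 by (intro mult_mono) (auto intro!: divide_nonneg_nonneg sum_nonneg simp: Xsplit[symmetric] Xnn A_def PMe PMe2)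
      then show ?thesis using EB0 True by (simp add: mult.commute)
    next
      case False
      then have l2: "2 \<le> l" using nl by simp
      have "exp (- kap \<epsilon>) = exp (- (\<epsilon>^2 * real l / 16)) * (2 * real l + 1)"
      proof -
        have "- kap \<epsilon> = - (\<epsilon>^2 * real l / 16) + ln (2*real l+1)" by (simp add: kap_def)
        then have "exp (- kap \<epsilon>) = exp (- (\<epsilon>^2 * real l / 16) + ln (2*real l+1))"
          by (simp only:)
        also have "\<dots> = exp (- (\<epsilon>^2 * real l / 16)) * exp (ln (2*real l+1))"
          by (rule exp_add)
        also have "exp (ln (2*real l+1)) = 2 * real l + 1" by (rule exp_ln) simp
        finally show ?thesis .
      qed
      moreover have "2 * (2 * real l + 1) \<le> real l ^ 4"
      proof -
        have "(2::real)^3 \<le> real l ^ 3" using l2 by (intro power_mono) auto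
        then have "(2::real)^3 * real l \<le> real l ^ 3 * real l" by (intro mult_right_mono) auto
        also have "real l ^ 3 * real l = real l ^ 4" by (simp add: power_Suc2[symmetric])
        finally show ?thesis using l2 by simp
      qed
      ultimately have "2 * M * exp (- kap \<epsilon>) \<le> M * (exp (- (\<epsilon>^2 * real l / 16)) * real l ^ 4)"
        using M0 by (simp add: mult_left_mono mult.assoc mult.left_commute)
      then show ?thesis using main by linarith
    qed
    have "(1 - \<epsilon>) * measure_pmf.expectation (cond_pmf \<mu> A) X - measure_pmf.expectation (cond_pmf \<mu> B) X
       = (1-\<epsilon>) * ((\<Sum>q\<in>PM 0. f (fst q) * g (snd q)) / real (card (PM 0)))
       - (\<Sum>q\<in>PM 1. f (fst q) * g (snd q)) / real (card (PM 1))" by (simp only: EA EB)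
    also have "\<dots> \<le> M * (exp (- (\<epsilon>^2 * real l / 16)) * real l ^ 4)" by (rule key)
    also have "\<dots> = Max (X ` (A \<union> B)) * 2 powr (- (\<epsilon>\<^sup>2 / (16 * ln 2)) * real l + 4 * log 2 (real l))"
      by (simp only: RHS M_def)
    finally show "(1 - \<epsilon>) * measure_pmf.expectation (cond_pmf \<mu> A) X - measure_pmf.expectation (cond_pmf \<mu> B) X
        \<le> Max (X ` (A \<union> B)) * 2 powr (- (\<epsilon>\<^sup>2 / (16 * ln 2)) * real l + 4 * log 2 (real l))" .
  qed
qed

end
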